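(* Let $\mathbf{B}$ be a complex $5$-dimensional nilpotent binary Leibniz algebra. Then $\mathbf{B}$ is a Leibniz algebra, or $\mathbf{B}$ is isomorphic to one of the following algebras, each given on a basis $e_1,\dots,e_5$ (all products of basis elements not listed are zero; $\alpha\in\mathbb{C}$): \begin{itemize} \item $\mathbf{B}_{01}$: $e_1e_2=e_3,\ e_2e_1=-e_3,\ e_3e_4=e_5,\ e_4e_3=-e_5$; \item $\mathbf{B}_{02}$: $e_1e_2=e_3,\ e_2e_1=-e_3,\ e_3e_4=e_5,\ e_4e_3=-e_5,\ e_4e_4=e_5$; \item $\mathbf{B}_{03}$: $e_1e_2=e_3,\ e_2e_1=-e_3,\ e_3e_4=e_5,\ e_4e_1=e_5,\ e_4e_3=-e_5$; \item $\mathbf{B}_{04}$: $e_1e_2=e_3,\ e_2e_1=-e_3,\ e_3e_4=e_5,\ e_4e_1=e_5,\ e_4e_3=-e_5,\ e_4e_4=e_5$; \item $\mathbf{B}_{05}$: $e_1e_2=e_3+e_5,\ e_2e_1=-e_3,\ e_3e_4=e_5,\ e_4e_3=-e_5$; \item $\mathbf{B}_{06}$: $e_1e_2=e_3+e_5,\ e_2e_1=-e_3,\ e_3e_4=e_5,\ e_4e_1=e_5,\ e_4e_3=-e_5$; \item $\mathbf{B}_{07}$: $e_1e_2=e_3+e_5,\ e_2e_1=-e_3,\ e_3e_4=e_5,\ e_4e_3=-e_5,\ e_4e_4=e_5$; \item $\mathbf{B}_{08}$: $e_1e_2=e_3+e_5,\ e_2e_1=-e_3,\ e_3e_4=e_5,\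 e_4e_1=e_5,\ e_4e_3=-e_5,\ e_4e_4=e_5$; \item $\mathbf{B}_{09}^{\alpha}$: $e_1e_2=e_3+e_5,\ e_2e_1=-e_3,\ e_3e_4=e_5,\ e_4e_1=e_5,\ e_4e_2=e_5,\ e_4e_3=-e_5,\ e_4e_4=\alpha e_5$; \item $\mathbf{B}_{10}$: $e_1e_1=e_5,\ e_1e_2=e_3,\ e_2e_1=-e_3,\ e_3e_4=e_5,\ e_4e_3=-e_5$; \item $\mathbf{B}_{11}$: $e_1e_1=e_5,\ e_1e_2=e_3,\ e_2e_1=-e_3,\ e_3e_4=e_5,\ e_4e_3=-e_5,\ e_4e_4=e_5$; \item $\mathbf{B}_{12}^{\alpha}$: $e_1e_1=e_5,\ e_1e_2=e_3,\ e_2e_1=-e_3,\ e_3e_4=e_5,\ e_4e_1=e_5,\ e_4e_3=-e_5,\ e_4e_4=\alpha e_5$; \item $\mathbf{B}_{13}$: $e_1e_1=e_5,\ e_1e_2=e_3,\ e_2e_1=-e_3,\ e_3e_4=e_5,\ e_4e_2=e_5,\ e_4e_3=-e_5$; \item $\mathbf{B}_{14}$: $e_1e_1=e_5,\ e_1e_2=e_3,\ e_2e_1=-e_3,\ e_3e_4=e_5,\ e_4e_2=e_5,\ e_4e_3=-e_5,\ e_4e_4=e_5$. \end{itemize}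
   Context: All algebras are over $\mathbb{C}$ and not necessarily associative. An algebra is a Leibniz algebra if it satisfies $(xy)z=(xz)y+x(yz)$ for all $x,y,z$. An algebra is a binary Leibniz algebra if every subalgebra generated by two elements is a Leibniz algebra. An algebra $A$ is nilpotent if there is $n$ such that every product of $n$ elements of $A$, with any arrangement of brackets, is zero. *)

theory Defs
  imports Complex_Main
begin

text \<open>A complex 5-dimensional algebra is represented, after choosing a basis
e1,...,e5, by its structure constants c i j k (the e_k-coefficient of e_i e_j).\<close>

datatype idx = E1 | E2 | E3 | E4 | E5

lemma UNIV_idx: "(UNIV :: idx set) = {E1, E2, E3, E4, E5}"
  using idx.exhaust by auto

instance idx :: finite
  by standard (simp add: UNIV_idx)

type_synonym vec5 = "idx \<Rightarrow> complex"
type_synonym sconst = "idx \<Rightarrow> idx \<Rightarrow> idx \<Rightarrow> complex"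

definition vadd :: "vec5 \<Rightarrow> vec5 \<Rightarrow> vec5" where
  "vadd x y = (\<lambda>k. x k + y k)"

definition vscale :: "complex \<Rightarrow> vec5 \<Rightarrow> vec5" where
  "vscale a x = (\<lambda>k. a * x k)"

definition vzero :: vec5 where
  "vzero = (\<lambda>k. 0)"

definition mul :: "sconst \<Rightarrow> vec5 \<Rightarrow> vec5 \<Rightarrow> vec5" where
  "mul c x y = (\<lambda>k. \<Sum>i\<in>UNIV. \<Sum>j\<in>UNIV. x i * y j * c i j k)"

definition leibniz_on :: "sconst \<Rightarrow> vec5 set \<Rightarrow> bool" where
  "leibniz_on c S \<longleftrightarrow> (\<forall>x\<in>S. \<forall>y\<in>S. \<forall>z\<in>S.
      mul c (mul c x y) z = vadd (mul c (mul c x z) y) (mul c x (mul c y z)))"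

definition leibniz :: "sconst \<Rightarrow> bool" where
  "leibniz c \<longleftrightarrow> leibniz_on c UNIV"

inductive_set gen2 :: "sconst \<Rightarrow> vec5 \<Rightarrow> vec5 \<Rightarrow> vec5 set" for c x y where
  gen_x: "x \<in> gen2 c x y"
| gen_y: "y \<in> gen2 c x y"
| gen_zero: "vzero \<in> gen2 c x y"
| gen_add: "a \<in> gen2 c x y \<Longrightarrow> b \<in> gen2 c x y \<Longrightarrow> vadd a b \<in> gen2 c x y"
| gen_scale: "a \<in> gen2 c x y \<Longrightarrow> vscale t a \<in> gen2 c x y"
| gen_mul: "a \<in> gen2 c x y \<Longrightarrow> b \<in> gen2 c x y \<Longrightarrow> mul c a b \<in> gen2 c x y"

definition binary_leibniz :: "sconst \<Rightarrow> bool" where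
  "binary_leibniz c \<longleftrightarrow> (\<forall>x y. leibniz_on c (gen2 c x y))"

inductive is_prod :: "sconst \<Rightarrow> nat \<Rightarrow> vec5 \<Rightarrow> bool" for c where
  prod_one: "is_prod c 1 x"
| prod_mul: "is_prod c m a \<Longrightarrow> is_prod c n b \<Longrightarrow> is_prod c (m + n) (mul c a b)"

definition nilpotent_alg :: "sconst \<Rightarrow> bool" where
  "nilpotent_alg c \<longleftrightarrow> (\<exists>n\<ge>1. \<forall>p. is_prod c n p \<longrightarrow> p = vzero)"

definition alg_iso :: "sconst \<Rightarrow> sconst \<Rightarrow> bool" where
  "alg_iso c d \<longleftrightarrow> (\<exists>f. bij f \<and>
      (\<forall>x y. f (vadd x y) = vadd (f x) (f y)) \<and>
      (\<forall>a x. f (vscale a x) = vscale a (f x)) \<and>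
      (\<forall>x y. f (mul c x y) = mul d (f x) (f y)))"

text \<open>Multiplication table: a list of entries (i, j, k, a) meaning that the
product e_i e_j has e_k-coefficient a (entries are summed).\<close>
definition tbl :: "(idx \<times> idx \<times> idx \<times> complex) list \<Rightarrow> sconst" where
  "tbl L i j k = sum_list (map (\<lambda>(i', j', k', a). if i' = i \<and> j' = j \<and> k' = k then a else 0) L)"

definition B01 :: sconst where
  "B01 = tbl [(E1,E2,E3,1), (E2,E1,E3,-1), (E3,E4,E5,1), (E4,E3,E5,-1)]"
definition B02 :: sconst where
  "B02 = tbl [(E1,E2,E3,1), (E2,E1,E3,-1), (E3,E4,E5,1), (E4,E3,E5,-1), (E4,E4,E5,1)]"
definition B03 :: sconst where
  "B03 = tbl [(E1,E2,E3,1), (E2,E1,E3,-1), (E3,E4,E5,1), (E4,E1,E5,1), (E4,E3,E5,-1)]"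
definition B04 :: sconst where
  "B04 = tbl [(E1,E2,E3,1), (E2,E1,E3,-1), (E3,E4,E5,1), (E4,E1,E5,1), (E4,E3,E5,-1), (E4,E4,E5,1)]"
definition B05 :: sconst where
  "B05 = tbl [(E1,E2,E3,1), (E1,E2,E5,1), (E2,E1,E3,-1), (E3,E4,E5,1), (E4,E3,E5,-1)]"
definition B06 :: sconst where
  "B06 = tbl [(E1,E2,E3,1), (E1,E2,E5,1), (E2,E1,E3,-1), (E3,E4,E5,1), (E4,E1,E5,1), (E4,E3,E5,-1)]"
definition B07 :: sconst where
  "B07 = tbl [(E1,E2,E3,1), (E1,E2,E5,1), (E2,E1,E3,-1), (E3,E4,E5,1), (E4,E3,E5,-1), (E4,E4,E5,1)]"
definition B08 :: sconst where
  "B08 = tbl [(E1,E2,E3,1), (E1,E2,E5,1), (E2,E1,E3,-1), (E3,E4,E5,1), (E4,E1,E5,1), (E4,E3,E5,-1), (E4,E4,E5,1)]"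
definition B09 :: "complex \<Rightarrow> sconst" where
  "B09 \<alpha> = tbl [(E1,E2,E3,1), (E1,E2,E5,1), (E2,E1,E3,-1), (E3,E4,E5,1), (E4,E1,E5,1), (E4,E2,E5,1), (E4,E3,E5,-1), (E4,E4,E5,\<alpha>)]"
definition B10 :: sconst where
  "B10 = tbl [(E1,E1,E5,1), (E1,E2,E3,1), (E2,E1,E3,-1), (E3,E4,E5,1), (E4,E3,E5,-1)]"
definition B11 :: sconst where
  "B11 = tbl [(E1,E1,E5,1), (E1,E2,E3,1), (E2,E1,E3,-1), (E3,E4,E5,1), (E4,E3,E5,-1), (E4,E4,E5,1)]"
definition B12 :: "complex \<Rightarrow> sconst" where
  "B12 \<alpha> = tbl [(E1,E1,E5,1), (E1,E2,E3,1), (E2,E1,E3,-1), (E3,E4,E5,1), (E4,E1,E5,1), (E4,E3,E5,-1), (E4,E4,E5,\<alpha>)]"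
definition B13 :: sconst where
  "B13 = tbl [(E1,E1,E5,1), (E1,E2,E3,1), (E2,E1,E3,-1), (E3,E4,E5,1), (E4,E2,E5,1), (E4,E3,E5,-1)]"
definition B14 :: sconst where
  "B14 = tbl [(E1,E1,E5,1), (E1,E2,E3,1), (E2,E1,E3,-1), (E3,E4,E5,1), (E4,E2,E5,1), (E4,E3,E5,-1), (E4,E4,E5,1)]"

end

theory Submission
  imports Defs "HOL-Library.Function_Algebras"
begin


lemma vadd_eq: "vadd x y = x + y" by (simp add: vadd_def fun_eq_iff)
lemma vzero_eq: "vzero = 0" by (simp add: vzero_def fun_eq_iff)

lemma swap3: "(\<Sum>r\<in>A. \<Sum>i\<in>B. \<Sum>j\<in>C. f r i j) = (\<Sum>i\<in>B. \<Sum>j\<in>C. \<Sum>r\<in>A. f r i j)"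
proof -
  have "(\<Sum>r\<in>A. \<Sum>i\<in>B. \<Sum>j\<in>C. f r i j) = (\<Sum>i\<in>B. \<Sum>r\<in>A. \<Sum>j\<in>C. f r i j)"
    by (rule sum.swap)
  also have "\<dots> = (\<Sum>i\<in>B. \<Sum>j\<in>C. \<Sum>r\<in>A. f r i j)"
    by (rule sum.cong[OF refl], rule sum.swap)
  finally show ?thesis .
qed

lemma swap4: "(\<Sum>i\<in>A. \<Sum>j\<in>B. \<Sum>p\<in>C. \<Sum>q\<in>D. f i j p q) = (\<Sum>p\<in>C. \<Sum>q\<in>D. \<Sum>i\<in>A. \<Sum>j\<in>B. f i j p q)"
proof -
  have "(\<Sum>i\<in>A. \<Sum>j\<in>B. \<Sum>p\<in>C. \<Sum>q\<in>D. f i j p q) = (\<Sum>i\<in>A. \<Sum>p\<in>C. \<Sum>q\<in>D. \<Sum>j\<in>B. f i j p q)"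
    by (rule sum.cong[OF refl], rule swap3)
  also have "\<dots> = (\<Sum>p\<in>C. \<Sum>q\<in>D. \<Sum>i\<in>A. \<Sum>j\<in>B. f i j p q)"
    by (rule swap3)
  finally show ?thesis .
qed

definition matv :: "(idx \<Rightarrow> idx \<Rightarrow> complex) \<Rightarrow> vec5 \<Rightarrow> vec5" where
  "matv M x = (\<lambda>k. \<Sum>i\<in>UNIV. M k i * x i)"

lemma matv_mul:
  assumes "\<And>i j k. (\<Sum>r\<in>UNIV. M k r * d i j r) = mul c (\<lambda>k. M k i) (\<lambda>k. M k j) k"
  shows "matv M (mul d x y) = mul c (matv M x) (matv M y)"
proof
  fix k
  have "matv M (mul d x y) k = (\<Sum>r\<in>UNIV. M k r * (\<Sum>i\<in>UNIV. \<Sum>j\<in>UNIV. x i * y j * d i j r))"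
    by (simp add: matv_def mul_def)
  also have "\<dots> = (\<Sum>r\<in>UNIV. \<Sum>i\<in>UNIV. \<Sum>j\<in>UNIV. x i * y j * (M k r * d i j r))"
    by (simp add: sum_distrib_left mult_ac)
  also have "\<dots> = (\<Sum>i\<in>UNIV. \<Sum>j\<in>UNIV. \<Sum>r\<in>UNIV. x i * y j * (M k r * d i j r))"
    by (rule swap3)
  also have "\<dots> = (\<Sum>i\<in>UNIV. \<Sum>j\<in>UNIV. x i * y j * (\<Sum>r\<in>UNIV. M k r * d i j r))"
    by (simp add: sum_distrib_left)
  also have "\<dots> = (\<Sum>i\<in>UNIV. \<Sum>j\<in>UNIV. x i * y j * (\<Sum>p\<in>UNIV. \<Sum>q\<in>UNIV. M p i * M q j * c p q k))"
    by (simp add: assms mul_def)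
  also have "\<dots> = (\<Sum>i\<in>UNIV. \<Sum>j\<in>UNIV. \<Sum>p\<in>UNIV. \<Sum>q\<in>UNIV. (M p i * x i) * (M q j * y j) * c p q k)"
    by (simp add: sum_distrib_left mult_ac)
  also have "\<dots> = (\<Sum>p\<in>UNIV. \<Sum>q\<in>UNIV. \<Sum>i\<in>UNIV. \<Sum>j\<in>UNIV. (M p i * x i) * (M q j * y j) * c p q k)"
    by (rule swap4)
  also have "\<dots> = (\<Sum>p\<in>UNIV. \<Sum>q\<in>UNIV. (\<Sum>i\<in>UNIV. M p i * x i) * (\<Sum>j\<in>UNIV. M q j * y j) * c p q k)"
    by (rule sum.cong[OF refl], rule sum.cong[OF refl]) (simp only: sum_product sum_distrib_right sum_distrib_left, rule sum.swap)
  also have "\<dots> = mul c (matv M x) (matv M y) k"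
    by (simp add: matv_def mul_def)
  finally show "matv M (mul d x y) k = mul c (matv M x) (matv M y) k" .
qed

lemma iso_by_matrix:
  assumes "bij (matv M)"
    and "\<And>i j k. (\<Sum>r\<in>UNIV. M k r * d i j r) = mul c (\<lambda>k. M k i) (\<lambda>k. M k j) k"
  shows "alg_iso d c"
  unfolding alg_iso_def
proof (intro exI[of _ "matv M"] conjI allI)
  show "bij (matv M)" by fact
  fix x y show "matv M (vadd x y) = vadd (matv M x) (matv M y)"
    by (simp add: matv_def vadd_def fun_eq_iff distrib_left sum.distrib)
next
  fix a x show "matv M (vscale a x) = vscale a (matv M x)"
    by (simp add: matv_def vscale_def fun_eq_iff sum_distrib_left mult_ac)
next
  fix x y show "matv M (mul d x y) = mul c (matv M x) (matv M y)"
    by (rule matv_mul[OF assms(2)])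
qed

lemma bij_matv:
  assumes "\<And>k i. (\<Sum>r\<in>UNIV. N k r * M r i) = (if k = i then 1 else 0)"
      and "\<And>k i. (\<Sum>r\<in>UNIV. M k r * N r i) = (if k = i then 1 else 0)"
  shows "bij (matv M)"
proof -
  have inv: "matv A (matv B x) = x" if h: "\<And>k i. (\<Sum>r\<in>UNIV. A k r * B r i) = (if k = i then 1 else 0)" for A B x
  proof
    fix k
    have "matv A (matv B x) k = (\<Sum>r\<in>UNIV. \<Sum>i\<in>UNIV. A k r * B r i * x i)"
      by (simp add: matv_def sum_distrib_left mult_ac)
    also have "\<dots> = (\<Sum>i\<in>UNIV. (\<Sum>r\<in>UNIV. A k r * B r i) * x i)"
      by (subst sum.swap) (simp add: sum_distrib_right)
    also have "\<dots> = (\<Sum>i\<in>UNIV. if k = i then x i else 0)" by (rule sum.cong) (auto simp: h)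
    also have "\<dots> = x k" by simp
    finally show "matv A (matv B x) k = x k" .
  qed
  show ?thesis
    by (rule o_bij[of "matv N"]) (auto simp: fun_eq_iff inv assms)
qed

lemma alg_iso_refl: "alg_iso c c"
  unfolding alg_iso_def by (rule exI[of _ id]) auto

lemma alg_iso_sym: assumes "alg_iso c d" shows "alg_iso d c"
proof -
  obtain f where f: "bij f" "\<forall>x y. f (vadd x y) = vadd (f x) (f y)"
    "\<forall>a x. f (vscale a x) = vscale a (f x)" "\<forall>x y. f (mul c x y) = mul d (f x) (f y)"
    using assms unfolding alg_iso_def by blast
  let ?g = "inv f"
  have gf: "?g (f x) = x" for x using f(1) by (simp add: bij_is_inj)
  have fg: "f (?g x) = x" for x using f(1) by (simp add: bij_is_surj surj_f_inv_f)
  show ?thesis unfolding alg_iso_def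
  proof (intro exI[of _ ?g] conjI allI)
    show "bij ?g" using f(1) by (simp add: bij_imp_bij_inv)
    fix x y show "?g (vadd x y) = vadd (?g x) (?g y)"
      by (metis f(2) fg gf)
  next
    fix a x show "?g (vscale a x) = vscale a (?g x)" by (metis f(3) fg gf)
  next
    fix x y show "?g (mul d x y) = mul c (?g x) (?g y)" by (metis f(4) fg gf)
  qed
qed

lemma alg_iso_trans: assumes "alg_iso c d" "alg_iso d e" shows "alg_iso c e"
proof -
  obtain f where f: "bij f" "\<forall>x y. f (vadd x y) = vadd (f x) (f y)"
    "\<forall>a x. f (vscale a x) = vscale a (f x)" "\<forall>x y. f (mul c x y) = mul d (f x) (f y)"
    using assms(1) unfolding alg_iso_def by blast
  obtain g where g: "bij g" "\<forall>x y. g (vadd x y) = vadd (g x) (g y)"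
    "\<forall>a x. g (vscale a x) = vscale a (g x)" "\<forall>x y. g (mul d x y) = mul e (g x) (g y)"
    using assms(2) unfolding alg_iso_def by blast
  show ?thesis unfolding alg_iso_def
    by (rule exI[of _ "g \<circ> f"]) (simp add: f g bij_comp)
qed



fun isV :: "idx \<Rightarrow> bool" where
  "isV E1 = True" | "isV E2 = True" | "isV E3 = False" | "isV E4 = True" | "isV E5 = False"

definition FAM :: "(idx \<Rightarrow> idx \<Rightarrow> complex) \<Rightarrow> (idx \<Rightarrow> complex) \<Rightarrow> (idx \<Rightarrow> idx \<Rightarrow> complex) \<Rightarrow> sconst" where
  "FAM P a Q i j k = (if isV i \<and> isV j then (if k = E3 then P i j else if k = E5 then Q i j else 0)
     else if i = E3 \<and> isV j then (if k = E5 then a j else 0)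
     else if isV i \<and> j = E3 then (if k = E5 then - a i else 0) else 0)"

lemma sumU: "(\<Sum>i\<in>UNIV. f i) = f E1 + f E2 + f E3 + f E4 + f E5"
  by (simp add: UNIV_idx add_ac)

definition sV :: "(idx \<Rightarrow> complex) \<Rightarrow> complex" where
  "sV f = f E1 + f E2 + f E4"

definition vch_M :: "(idx \<Rightarrow> idx \<Rightarrow> complex) \<Rightarrow> idx \<Rightarrow> idx \<Rightarrow> complex" where
  "vch_M g k i = (if isV k \<and> isV i then g k i else if k = i \<and> \<not> isV k then 1 else 0)"

lemma FAM_vchange:
  assumes hg: "\<And>k i. isV k \<Longrightarrow> isV i \<Longrightarrow> sV (\<lambda>r. h k r * g r i) = (if k = i then 1 else 0)"
      and gh: "\<And>k i. isV k \<Longrightarrow> isV i \<Longrightarrow> sV (\<lambda>r. g k r * h r i) = (if k = i then 1 else 0)"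
  shows "alg_iso (FAM (\<lambda>i j. sV (\<lambda>p. sV (\<lambda>q. g p i * g q j * P p q)))
                      (\<lambda>i. sV (\<lambda>p. g p i * a p))
                      (\<lambda>i j. sV (\<lambda>p. sV (\<lambda>q. g p i * g q j * Q p q)))) (FAM P a Q)"
proof (rule iso_by_matrix[where M = "vch_M g"])
  show "bij (matv (vch_M g))"
  proof (rule bij_matv[where N = "vch_M h"])
    fix k i
    show "(\<Sum>r\<in>UNIV. vch_M h k r * vch_M g r i) = (if k = i then 1 else 0)"
      using hg[of k i] by (cases k; cases i) (simp_all add: sumU vch_M_def sV_def)
    show "(\<Sum>r\<in>UNIV. vch_M g k r * vch_M h r i) = (if k = i then 1 else 0)"
      using gh[of k i] by (cases k; cases i) (simp_all add: sumU vch_M_def sV_def)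
  qed
next
  fix i j k
  show "(\<Sum>r\<in>UNIV. vch_M g k r * FAM (\<lambda>i j. sV (\<lambda>p. sV (\<lambda>q. g p i * g q j * P p q)))
                      (\<lambda>i. sV (\<lambda>p. g p i * a p))
                      (\<lambda>i j. sV (\<lambda>p. sV (\<lambda>q. g p i * g q j * Q p q))) i j r) =
    mul (FAM P a Q) (\<lambda>k. vch_M g k i) (\<lambda>k. vch_M g k j) k"
    by (cases i; cases j; cases k) (simp_all add: sumU vch_M_def sV_def FAM_def mul_def algebra_simps)
qed

definition sc_M :: "complex \<Rightarrow> complex \<Rightarrow> idx \<Rightarrow> idx \<Rightarrow> complex" where
  "sc_M s w k i = (if k = i then (if k = E3 then s else if k = E5 then w else 1) else 0)"

lemma FAM_scale:
  assumes "s \<noteq> 0" "w \<noteq> 0"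
  shows "alg_iso (FAM (\<lambda>i j. P i j / s) (\<lambda>i. s * a i / w) (\<lambda>i j. Q i j / w)) (FAM P a Q)"
proof (rule iso_by_matrix[where M = "sc_M s w"])
  show "bij (matv (sc_M s w))"
  proof (rule bij_matv[where N = "sc_M (1/s) (1/w)"])
    fix k i
    show "(\<Sum>r\<in>UNIV. sc_M (1/s) (1/w) k r * sc_M s w r i) = (if k = i then 1 else 0)"
      using assms by (cases k; cases i) (simp_all add: sumU sc_M_def)
    show "(\<Sum>r\<in>UNIV. sc_M s w k r * sc_M (1/s) (1/w) r i) = (if k = i then 1 else 0)"
      using assms by (cases k; cases i) (simp_all add: sumU sc_M_def)
  qed
next
  fix i j k
  show "(\<Sum>r\<in>UNIV. sc_M s w k r * FAM (\<lambda>i j. P i j / s) (\<lambda>i. s * a i / w) (\<lambda>i j. Q i j / w) i j r) =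
    mul (FAM P a Q) (\<lambda>k. sc_M s w k i) (\<lambda>k. sc_M s w k j) k"
    using assms by (cases i; cases j; cases k) (simp_all add: sumU sc_M_def FAM_def mul_def)
qed

definition sh_M :: "(idx \<Rightarrow> complex) \<Rightarrow> complex \<Rightarrow> idx \<Rightarrow> idx \<Rightarrow> complex" where
  "sh_M h r k i = (if k = i then 1 else if k = E3 \<and> isV i then h i else if k = E5 \<and> i = E3 then r else 0)"

definition sh_N :: "(idx \<Rightarrow> complex) \<Rightarrow> complex \<Rightarrow> idx \<Rightarrow> idx \<Rightarrow> complex" where
  "sh_N h r k i = (if k = i then 1 else if k = E3 \<and> isV i then - h i
     else if k = E5 \<and> isV i then h i * r else if k = E5 \<and> i = E3 then - r else 0)"

lemma FAM_shift:
  shows "alg_iso (FAM P a (\<lambda>i j. Q i j - r * P i j + h i * a j - h j * a i)) (FAM P a Q)"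
proof (rule iso_by_matrix[where M = "sh_M h r"])
  show "bij (matv (sh_M h r))"
  proof (rule bij_matv[where N = "sh_N h r"])
    fix k i
    show "(\<Sum>x\<in>UNIV. sh_N h r k x * sh_M h r x i) = (if k = i then 1 else 0)"
      by (cases k; cases i) (simp_all add: sumU sh_M_def sh_N_def)
    show "(\<Sum>x\<in>UNIV. sh_M h r k x * sh_N h r x i) = (if k = i then 1 else 0)"
      by (cases k; cases i) (simp_all add: sumU sh_M_def sh_N_def)
  qed
next
  fix i j k
  show "(\<Sum>x\<in>UNIV. sh_M h r k x * FAM P a (\<lambda>i j. Q i j - r * P i j + h i * a j - h j * a i) i j x) =
    mul (FAM P a Q) (\<lambda>k. sh_M h r k i) (\<lambda>k. sh_M h r k j) k"
    by (cases i; cases j; cases k) (simp_all add: sumU sh_M_def FAM_def mul_def algebra_simps)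
qed



definition P0 :: "idx \<Rightarrow> idx \<Rightarrow> complex" where
  "P0 i j = (if i = E1 \<and> j = E2 then 1 else if i = E2 \<and> j = E1 then -1 else 0)"
definition a0 :: "idx \<Rightarrow> complex" where
  "a0 i = (if i = E4 then 1 else 0)"
definition Fm :: "(idx \<Rightarrow> idx \<Rightarrow> complex) \<Rightarrow> sconst" where
  "Fm Q = FAM P0 a0 Q"
definition Qn :: "complex \<Rightarrow> complex \<Rightarrow> complex \<Rightarrow> complex \<Rightarrow> complex \<Rightarrow> complex \<Rightarrow> idx \<Rightarrow> idx \<Rightarrow> complex" where
  "Qn q11 \<sigma> q22 f1 f2 q44 i j = (if i = E1 \<and> j = E1 then q11 else if i = E1 \<and> j = E2 then \<sigma>
     else if i = E2 \<and> j = E2 then q22 else if i = E4 \<and> j = E1 then f1 else if i = E4 \<and> j = E2 then f2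
     else if i = E4 \<and> j = E4 then q44 else 0)"
definition Nf :: "complex \<Rightarrow> complex \<Rightarrow> complex \<Rightarrow> complex \<Rightarrow> complex \<Rightarrow> complex \<Rightarrow> sconst" where
  "Nf q11 \<sigma> q22 f1 f2 q44 = Fm (Qn q11 \<sigma> q22 f1 f2 q44)"

lemma FAM_cong:
  assumes "\<And>i j. isV i \<Longrightarrow> isV j \<Longrightarrow> P i j = P' i j"
    "\<And>i. isV i \<Longrightarrow> a i = a' i"
    "\<And>i j. isV i \<Longrightarrow> isV j \<Longrightarrow> Q i j = Q' i j"
  shows "FAM P a Q = FAM P' a' Q'"
  using assms unfolding FAM_def by (auto simp: fun_eq_iff)

lemma vch_to_Fm:
  assumes hg: "\<And>k i. isV k \<Longrightarrow> isV i \<Longrightarrow> sV (\<lambda>r. h k r * g r i) = (if k = i then 1 else 0)"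
      and gh: "\<And>k i. isV k \<Longrightarrow> isV i \<Longrightarrow> sV (\<lambda>r. g k r * h r i) = (if k = i then 1 else 0)"
      and Pg: "\<And>i j. isV i \<Longrightarrow> isV j \<Longrightarrow> sV (\<lambda>p. sV (\<lambda>q. g p i * g q j * P p q)) = \<kappa> * P0 i j"
      and ag: "\<And>i. isV i \<Longrightarrow> sV (\<lambda>p. g p i * a p) = \<tau> * a0 i"
      and nz: "\<kappa> \<noteq> 0" "\<tau> \<noteq> 0"
  shows "alg_iso (Fm (\<lambda>i j. sV (\<lambda>p. sV (\<lambda>q. g p i * g q j * Q p q)) / (\<kappa> * \<tau>))) (FAM P a Q)"
proof -
  let ?P = "\<lambda>i j. sV (\<lambda>p. sV (\<lambda>q. g p i * g q j * P p q))"
  let ?a = "\<lambda>i. sV (\<lambda>p. g p i * a p)"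
  let ?Q = "\<lambda>i j. sV (\<lambda>p. sV (\<lambda>q. g p i * g q j * Q p q))"
  have 1: "alg_iso (FAM ?P ?a ?Q) (FAM P a Q)" by (rule FAM_vchange[OF hg gh])
  have 2: "alg_iso (FAM (\<lambda>i j. ?P i j / \<kappa>) (\<lambda>i. \<kappa> * ?a i / (\<kappa> * \<tau>)) (\<lambda>i j. ?Q i j / (\<kappa> * \<tau>))) (FAM ?P ?a ?Q)"
    using nz by (intro FAM_scale) auto
  have 3: "FAM (\<lambda>i j. ?P i j / \<kappa>) (\<lambda>i. \<kappa> * ?a i / (\<kappa> * \<tau>)) (\<lambda>i j. ?Q i j / (\<kappa> * \<tau>)) = Fm (\<lambda>i j. ?Q i j / (\<kappa> * \<tau>))"
    unfolding Fm_def using nz by (intro FAM_cong) (simp_all add: Pg ag)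
  show ?thesis using alg_iso_trans[OF 2 1] 3 by simp
qed

lemma Fm_to_N:
  "alg_iso (Nf (Q E1 E1) (Q E1 E2 + Q E2 E1) (Q E2 E2) (Q E4 E1 + Q E1 E4) (Q E4 E2 + Q E2 E4) (Q E4 E4)) (Fm Q)"
proof -
  let ?h = "\<lambda>i. if i = E1 then - Q E1 E4 else if i = E2 then - Q E2 E4 else 0"
  let ?r = "- Q E2 E1"
  have "alg_iso (FAM P0 a0 (\<lambda>i j. Q i j - ?r * P0 i j + ?h i * a0 j - ?h j * a0 i)) (FAM P0 a0 Q)"
    by (rule FAM_shift)
  moreover have "FAM P0 a0 (\<lambda>i j. Q i j - ?r * P0 i j + ?h i * a0 j - ?h j * a0 i) =
     Nf (Q E1 E1) (Q E1 E2 + Q E2 E1) (Q E2 E2) (Q E4 E1 + Q E1 E4) (Q E4 E2 + Q E2 E4) (Q E4 E4)"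
    unfolding Nf_def Fm_def
    apply (intro FAM_cong)
    by (auto simp: Qn_def P0_def a0_def elim: isV.elims)
  ultimately show ?thesis by (simp add: Fm_def)
qed



lemma N_move:
  assumes hg: "\<And>k i. isV k \<Longrightarrow> isV i \<Longrightarrow> sV (\<lambda>r. h k r * g r i) = (if k = i then 1 else 0)"
      and gh: "\<And>k i. isV k \<Longrightarrow> isV i \<Longrightarrow> sV (\<lambda>r. g k r * h r i) = (if k = i then 1 else 0)"
      and Pg: "\<And>i j. isV i \<Longrightarrow> isV j \<Longrightarrow> sV (\<lambda>p. sV (\<lambda>q. g p i * g q j * P0 p q)) = \<kappa> * P0 i j"
      and ag: "\<And>i. isV i \<Longrightarrow> sV (\<lambda>p. g p i * a0 p) = \<tau> * a0 i"
      and nz: "\<kappa> \<noteq> 0" "\<tau> \<noteq> 0"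
      and Q': "Q' = (\<lambda>i j. sV (\<lambda>p. sV (\<lambda>q. g p i * g q j * Qn q11 \<sigma> q22 f1 f2 q44 p q)) / (\<kappa> * \<tau>))"
      and e: "n11 = Q' E1 E1" "n\<sigma> = Q' E1 E2 + Q' E2 E1" "n22 = Q' E2 E2"
         "nf1 = Q' E4 E1 + Q' E1 E4" "nf2 = Q' E4 E2 + Q' E2 E4" "n44 = Q' E4 E4"
  shows "alg_iso (Nf n11 n\<sigma> n22 nf1 nf2 n44) (Nf q11 \<sigma> q22 f1 f2 q44)"
proof -
  have 1: "alg_iso (Fm Q') (Nf q11 \<sigma> q22 f1 f2 q44)"
    unfolding Q' Nf_def Fm_def[of "Qn _ _ _ _ _ _"]
    by (rule vch_to_Fm[OF hg gh Pg ag nz])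
  show ?thesis using alg_iso_trans[OF Fm_to_N[of Q'] 1] by (simp add: e)
qed

lemmas N_move_simps = sV_def Qn_def P0_def a0_def

lemma N_T12: "alg_iso (Nf (q11 + s*\<sigma> + s^2*q22) (\<sigma> + 2*s*q22) q22 (f1 + s*f2) f2 q44) (Nf q11 \<sigma> q22 f1 f2 q44)"
  apply (rule N_move[where g = "\<lambda>k i. if k = i then 1 else if k = E2 \<and> i = E1 then s else 0"
        and h = "\<lambda>k i. if k = i then 1 else if k = E2 \<and> i = E1 then -s else 0" and \<kappa> = 1 and \<tau> = 1, OF _ _ _ _ _ _ refl])
  by (auto simp: N_move_simps power2_eq_square algebra_simps elim!: isV.elims)

lemma N_T21: "alg_iso (Nf q11 (\<sigma> + 2*s*q11) (q22 + s*\<sigma> + s^2*q11) f1 (f2 + s*f1) q44) (Nf q11 \<sigma> q22 f1 f2 q44)"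
  apply (rule N_move[where g = "\<lambda>k i. if k = i then 1 else if k = E1 \<and> i = E2 then s else 0"
        and h = "\<lambda>k i. if k = i then 1 else if k = E1 \<and> i = E2 then -s else 0" and \<kappa> = 1 and \<tau> = 1, OF _ _ _ _ _ _ refl])
  by (auto simp: N_move_simps power2_eq_square algebra_simps elim!: isV.elims)

lemma N_SC:
  assumes "s \<noteq> 0" "r \<noteq> 0" "l \<noteq> 0"
  shows "alg_iso (Nf (s*q11/(r*l)) (\<sigma>/l) (r*q22/(s*l)) (f1/r) (f2/s) (l*q44/(s*r))) (Nf q11 \<sigma> q22 f1 f2 q44)"
  apply (rule N_move[where g = "\<lambda>k i. if k = i then (if k = E1 then s else if k = E2 then r else l) else 0"
        and h = "\<lambda>k i. if k = i then (if k = E1 then 1/s else if k = E2 then 1/r else 1/l) else 0"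
        and \<kappa> = "s*r" and \<tau> = l, OF _ _ _ _ _ _ refl])
  using assms by (auto simp: N_move_simps power2_eq_square field_simps elim!: isV.elims)

lemma N_SW: "alg_iso (Nf (-q22) (-\<sigma>) (-q11) (-f2) (-f1) (-q44)) (Nf q11 \<sigma> q22 f1 f2 q44)"
  apply (rule N_move[where g = "\<lambda>k i. if (k = E1 \<and> i = E2) \<or> (k = E2 \<and> i = E1) \<or> (k = E4 \<and> i = E4) then 1 else 0"
        and h = "\<lambda>k i. if (k = E1 \<and> i = E2) \<or> (k = E2 \<and> i = E1) \<or> (k = E4 \<and> i = E4) then 1 else 0"
        and \<kappa> = "-1" and \<tau> = 1, OF _ _ _ _ _ _ refl])
  by (auto simp: N_move_simps elim!: isV.elims)



lemmas Bsimps = tbl_def Nf_def Fm_def FAM_def Qn_def P0_def a0_def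

lemma B_eq:
  "B01 = Nf 0 0 0 0 0 0" "B02 = Nf 0 0 0 0 0 1" "B03 = Nf 0 0 0 1 0 0" "B04 = Nf 0 0 0 1 0 1"
  "B05 = Nf 0 1 0 0 0 0" "B06 = Nf 0 1 0 1 0 0" "B07 = Nf 0 1 0 0 0 1" "B08 = Nf 0 1 0 1 0 1"
  "B09 \<alpha> = Nf 0 1 0 1 1 \<alpha>" "B10 = Nf 1 0 0 0 0 0" "B11 = Nf 1 0 0 0 0 1"
  "B12 \<alpha> = Nf 1 0 0 1 0 \<alpha>" "B13 = Nf 1 0 0 0 1 0" "B14 = Nf 1 0 0 0 1 1"
  unfolding B01_def B02_def B03_def B04_def B05_def B06_def B07_def B08_def B09_def B10_def
    B11_def B12_def B13_def B14_def
  by (intro ext; case_tac x; case_tac xa; case_tac xb; simp add: Bsimps)+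

definition LIST :: "sconst \<Rightarrow> bool" where
  "LIST c \<longleftrightarrow> alg_iso c B01 \<or> alg_iso c B02 \<or> alg_iso c B03 \<or> alg_iso c B04
    \<or> alg_iso c B05 \<or> alg_iso c B06 \<or> alg_iso c B07 \<or> alg_iso c B08
    \<or> (\<exists>\<alpha>. alg_iso c (B09 \<alpha>)) \<or> alg_iso c B10 \<or> alg_iso c B11
    \<or> (\<exists>\<alpha>. alg_iso c (B12 \<alpha>)) \<or> alg_iso c B13 \<or> alg_iso c B14"

lemma LIST_iso: "alg_iso c d \<Longrightarrow> LIST d \<Longrightarrow> LIST c"
  unfolding LIST_def by (meson alg_iso_trans)

lemma LIST_iso': "alg_iso d c \<Longrightarrow> LIST d \<Longrightarrow> LIST c"
  using LIST_iso alg_iso_sym by blast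

lemma LIST_B: "LIST (Nf 0 0 0 0 0 0)" "LIST (Nf 0 0 0 0 0 1)" "LIST (Nf 0 0 0 1 0 0)" "LIST (Nf 0 0 0 1 0 1)"
  "LIST (Nf 0 1 0 0 0 0)" "LIST (Nf 0 1 0 1 0 0)" "LIST (Nf 0 1 0 0 0 1)" "LIST (Nf 0 1 0 1 0 1)"
  "LIST (Nf 0 1 0 1 1 \<alpha>)" "LIST (Nf 1 0 0 0 0 0)" "LIST (Nf 1 0 0 0 0 1)"
  "LIST (Nf 1 0 0 1 0 \<alpha>)" "LIST (Nf 1 0 0 0 1 0)" "LIST (Nf 1 0 0 0 1 1)"
  unfolding LIST_def B_eq[symmetric] by (blast intro: alg_iso_refl)+

lemma L_T12: "LIST (Nf (qa + s*\<sigma> + s^2*qb) (\<sigma> + 2*s*qb) qb (fa + s*fb) fb qc) \<Longrightarrow> LIST (Nf qa \<sigma> qb fa fb qc)"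
  by (rule LIST_iso'[OF N_T12])
lemma L_T21: "LIST (Nf qa (\<sigma> + 2*s*qa) (qb + s*\<sigma> + s^2*qa) fa (fb + s*fa) qc) \<Longrightarrow> LIST (Nf qa \<sigma> qb fa fb qc)"
  by (rule LIST_iso'[OF N_T21])
lemma L_SC: "s \<noteq> 0 \<Longrightarrow> r \<noteq> 0 \<Longrightarrow> l \<noteq> 0 \<Longrightarrow> LIST (Nf (s*qa/(r*l)) (\<sigma>/l) (r*qb/(s*l)) (fa/r) (fb/s) (l*qc/(s*r))) \<Longrightarrow> LIST (Nf qa \<sigma> qb fa fb qc)"
  by (rule LIST_iso'[OF N_SC])
lemma L_SW: "LIST (Nf (-qb) (-\<sigma>) (-qa) (-fb) (-fa) (-qc)) \<Longrightarrow> LIST (Nf qa \<sigma> qb fa fb qc)"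
  by (rule LIST_iso'[OF N_SW])

lemma L_rank0_f1: assumes "fa \<noteq> 0" shows "LIST (Nf 0 0 0 fa 0 qc)"
proof (cases "qc = 0")
  case True
  show ?thesis using L_SC[where s="1" and r="fa" and l="1" and qa="0" and \<sigma>="0" and qb="0" and fa="fa" and fb="0" and qc="qc"] assms True LIST_B(3) by simp
next
  case False
  show ?thesis using L_SC[where s="1" and r="fa" and l="fa/qc" and qa="0" and \<sigma>="0" and qb="0" and fa="fa" and fb="0" and qc="qc"] assms False LIST_B(4) by simp
qed

lemma L_rank0: "LIST (Nf 0 0 0 fa fb qc)"
proof -
  have A: "LIST (Nf 0 0 0 fa fb qc)" if "fa \<noteq> 0" for fa fb qc
    using L_T21[where qa="0" and \<sigma>="0" and qb="0" and fa="fa" and fb="fb" and qc="qc" and s="- fb/fa"] L_rank0_f1[of fa qc] that by simp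
  show ?thesis
  proof (cases "fa = 0")
    case False then show ?thesis by (rule A)
  next
    case fa: True
    show ?thesis
    proof (cases "fb = 0")
      case False
      then show ?thesis using L_SW[where qa="0" and \<sigma>="0" and qb="0" and fa="fa" and fb="fb" and qc="qc"] A[of "-fb" "-fa" "-qc"] by simp
    next
      case fb: True
      show ?thesis
      proof (cases "qc = 0")
        case True then show ?thesis using fa fb LIST_B(1) by simp
      next
        case False then show ?thesis using fa fb L_SC[where s="1" and r="1" and l="1/qc" and qa="0" and \<sigma>="0" and qb="0" and fa="0" and fb="0" and qc="qc"] LIST_B(2) by simp
      qed
    qed
  qed
qed

lemma L_hyp1: "LIST (Nf 0 1 0 fa fb qc)"
proof -
  have A: "LIST (Nf 0 1 0 fa 0 qc)" if "fa \<noteq> 0" for fa qc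
  proof (cases "qc = 0")
    case True then show ?thesis using L_SC[where s="1" and r="fa" and l="1" and qa="0" and \<sigma>="1" and qb="0" and fa="fa" and fb="0" and qc="qc"] that LIST_B(6) by simp
  next
    case False then show ?thesis using L_SC[where s="qc/fa" and r="fa" and l="1" and qa="0" and \<sigma>="1" and qb="0" and fa="fa" and fb="0" and qc="qc"] that LIST_B(8) by simp
  qed
  show ?thesis
  proof (cases "fa = 0")
    case fa: True
    show ?thesis
    proof (cases "fb = 0")
      case fb: True
      show ?thesis
      proof (cases "qc = 0")
        case True then show ?thesis using fa fb LIST_B(5) by simp
      next
        case False then show ?thesis using fa fb L_SC[where s="1" and r="qc" and l="1" and qa="0" and \<sigma>="1" and qb="0" and fa="0" and fb="0" and qc="qc"] LIST_B(7) by simp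
      qed
    next
      case False
      have "LIST (Nf 0 (-1) 0 (-fb) 0 (-qc))"
        using L_SC[where s="1" and r="1" and l="-1" and qa="0" and \<sigma>="-1" and qb="0" and fa="-fb" and fb="0" and qc="-qc"] A[of "-fb" "qc"] False by simp
      then show ?thesis using L_SW[where qa="0" and \<sigma>="1" and qb="0" and fa="fa" and fb="fb" and qc="qc"] fa by simp
    qed
  next
    case fa: False
    show ?thesis
    proof (cases "fb = 0")
      case True then show ?thesis using A fa by simp
    next
      case False
      then show ?thesis using L_SC[where s="fb" and r="fa" and l="1" and qa="0" and \<sigma>="1" and qb="0" and fa="fa" and fb="fb" and qc="qc"] fa LIST_B(9)[of "qc/(fb*fa)"] by simp
    qed
  qed
qed

lemma L_hyp: "\<sigma> \<noteq> 0 \<Longrightarrow> LIST (Nf 0 \<sigma> 0 fa fb qc)"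
  using L_SC[where s="1" and r="1" and l="\<sigma>" and qa="0" and \<sigma>="\<sigma>" and qb="0" and fa="fa" and fb="fb" and qc="qc"] L_hyp1[of fa fb "\<sigma>*qc"] by simp

lemma csqrt_nz: "z \<noteq> 0 \<Longrightarrow> csqrt z \<noteq> 0" by simp

lemma L_r1: "LIST (Nf 1 0 0 fa fb qc)"
proof -
  have B: "LIST (Nf 1 0 0 0 1 qc)" for qc
  proof (cases "qc = 0")
    case True then show ?thesis using LIST_B(13) by simp
  next
    case False
    let ?r = "csqrt qc"
    have r: "?r \<noteq> 0" "?r * ?r = qc" using False by (simp, metis power2_csqrt power2_eq_square)
    show ?thesis using L_SC[where s="1" and r="?r" and l="1/?r" and qa="1" and \<sigma>="0" and qb="0" and fa="0" and fb="1" and qc="qc"] r LIST_B(14) by simp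
  qed
  show ?thesis
  proof (cases "fb = 0")
    case False
    have "LIST (Nf 1 0 0 0 fb qc)"
      using L_SC[where s="fb" and r="1" and l="fb" and qa="1" and \<sigma>="0" and qb="0" and fa="0" and fb="fb" and qc="qc"] False B[of qc] by simp
    then show ?thesis using L_T12[where qa="1" and s="-fa/fb" and \<sigma>="0" and qb="0" and fa="fa" and fb="fb" and qc="qc"] False by simp
  next
    case fb: True
    show ?thesis
    proof (cases "fa = 0")
      case False
      then show ?thesis using L_SC[where s="1" and r="fa" and l="1/fa" and qa="1" and \<sigma>="0" and qb="0" and fa="fa" and fb="0" and qc="qc"] fb LIST_B(12)[of "qc/(fa*fa)"]
        by (simp add: field_simps)
    next
      case fa: True
      show ?thesis
      proof (cases "qc = 0")
        case True then show ?thesis using fa fb LIST_B(10) by simp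
      next
        case False
        let ?r = "csqrt qc"
        have r: "?r \<noteq> 0" "?r * ?r = qc" using False by (simp, metis power2_csqrt power2_eq_square)
        show ?thesis using L_SC[where s="1" and r="?r" and l="1/?r" and qa="1" and \<sigma>="0" and qb="0" and fa="0" and fb="0" and qc="qc"] r fa fb LIST_B(11) by simp
      qed
    qed
  qed
qed

lemma L_rank1: "qa \<noteq> 0 \<Longrightarrow> LIST (Nf qa 0 0 fa fb qc)"
  using L_SC[where s="1" and r="1" and l="qa" and qa="qa" and \<sigma>="0" and qb="0" and fa="fa" and fb="fb" and qc="qc"] L_r1[of fa fb "qa*qc"] by simp

lemma L_q11zero: "\<sigma> \<noteq> 0 \<Longrightarrow> LIST (Nf 0 \<sigma> qb fa fb qc)"
  using L_T21[where qa="0" and \<sigma>="\<sigma>" and qb="qb" and fa="fa" and fb="fb" and qc="qc" and s="-qb/\<sigma>"] L_hyp[of \<sigma> fa "fb - qb/\<sigma>*fa" qc] by simp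

lemma L_all: "LIST (Nf qa \<sigma> qb fa fb qc)"
proof (cases "\<sigma>^2 - 4*qa*qb = 0")
  case D0: True
  show ?thesis
  proof (cases "qa = 0")
    case False
    have "qb + (-\<sigma>/(2*qa))*\<sigma> + (-\<sigma>/(2*qa))^2*qa = 0"
      using D0 False by (simp add: field_simps power2_eq_square)
    then show ?thesis using L_T21[where qa="qa" and \<sigma>="\<sigma>" and qb="qb" and fa="fa" and fb="fb" and qc="qc" and s="-\<sigma>/(2*qa)"] False
        L_rank1[of qa fa "fb + (-\<sigma>/(2*qa))*fa" qc] by simp
  next
    case qa: True
    then have s: "\<sigma> = 0" using D0 by simp
    show ?thesis
    proof (cases "qb = 0")
      case True then show ?thesis using qa s L_rank0 by simp
    next
      case False then show ?thesis using L_SW[where qa="qa" and \<sigma>="\<sigma>" and qb="qb" and fa="fa" and fb="fb" and qc="qc"] L_rank1[of "-qb" "-fb" "-fa" "-qc"] qa s by simp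
    qed
  qed
next
  case D: False
  have Z: "LIST (Nf 0 \<sigma> qb fa fb qc)" if "\<sigma>^2 - 4*0*qb \<noteq> 0" for \<sigma> qb fa fb qc
    using L_q11zero that by simp
  show ?thesis
  proof (cases "qa = 0")
    case True then show ?thesis using Z D by simp
  next
    case qa: False
    show ?thesis
    proof (cases "qb = 0")
      case True
      then show ?thesis using L_SW[where qa="qa" and \<sigma>="\<sigma>" and qb="qb" and fa="fa" and fb="fb" and qc="qc"] Z[of "-\<sigma>" "-qa" "-fb" "-fa" "-qc"] D by simp
    next
      case qb: False
      let ?r = "csqrt (\<sigma>^2 - 4*qa*qb)"
      have r2: "?r^2 = \<sigma>^2 - 4*qa*qb" by simp
      let ?s = "(-\<sigma> + ?r)/(2*qb)"
      have e0: "4*qb*(qa + ?s*\<sigma> + ?s^2*qb) = 4*qa*qb - \<sigma>^2 + ?r^2"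
        using qb by (simp add: field_simps power2_eq_square)
      have e1: "qa + ?s*\<sigma> + ?s^2*qb = 0"
        using e0 r2 qb by simp
      have e2: "\<sigma> + 2*?s*qb = ?r" using qb by (simp add: field_simps)
      have "?r \<noteq> 0" using D by simp
      then have "?r^2 - 4*0*qb \<noteq> 0" by simp
      then show ?thesis using L_T12[where qa="qa" and s="?s" and \<sigma>="\<sigma>" and qb="qb" and fa="fa" and fb="fb" and qc="qc"] Z[of ?r qb "fa + ?s*fb" fb qc] e1 e2 by simp
    qed
  qed
qed



lemma LIST_Fm: "LIST (Fm Q)"
  using LIST_iso'[OF Fm_to_N L_all] .

definition altP :: "(idx \<Rightarrow> idx \<Rightarrow> complex) \<Rightarrow> bool" where
  "altP P \<longleftrightarrow> P E1 E1 = 0 \<and> P E2 E2 = 0 \<and> P E4 E4 = 0 \<and> P E2 E1 = - P E1 E2 \<and> P E4 E1 = - P E1 E4 \<and> P E4 E2 = - P E2 E4"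

definition tt :: "(idx \<Rightarrow> idx \<Rightarrow> complex) \<Rightarrow> (idx \<Rightarrow> complex) \<Rightarrow> complex" where
  "tt P a = P E1 E2 * a E4 - P E1 E4 * a E2 + P E2 E4 * a E1"

lemma inv_div:
  assumes "D \<noteq> 0" "sV (\<lambda>r. H k r * g r i) = (if k = i then D else 0)"
  shows "sV (\<lambda>r. (H k r / D) * g r i) = (if k = i then 1 else 0)"
proof -
  have "sV (\<lambda>r. (H k r / D) * g r i) = sV (\<lambda>r. H k r * g r i) / D"
    by (simp add: sV_def add_divide_distrib)
  then show ?thesis using assms by simp
qed

lemma inv_div2:
  assumes "D \<noteq> 0" "sV (\<lambda>r. g k r * H r i) = (if k = i then D else 0)"
  shows "sV (\<lambda>r. g k r * (H r i / D)) = (if k = i then 1 else 0)"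
proof -
  have "sV (\<lambda>r. g k r * (H r i / D)) = sV (\<lambda>r. g k r * H r i) / D"
    by (simp add: sV_def add_divide_distrib)
  then show ?thesis using assms by simp
qed

lemma LIST_FAM_a4:
  assumes alt: "altP P" and t: "tt P a \<noteq> 0" and a4: "a E4 \<noteq> 0"
  shows "LIST (FAM P a Q)"
proof -
  let ?t = "tt P a"
  define g where "g = (\<lambda>k i. if i = E1 then (if k = E1 then a E4 else if k = E4 then - a E1 else 0)
     else if i = E2 then (if k = E2 then a E4 else if k = E4 then - a E2 else 0)
     else (if k = E1 then P E2 E4 else if k = E2 then - P E1 E4 else if k = E4 then P E1 E2 else 0))"
  define DD where "DD = a E4 * ?t"
  define H where "H = (\<lambda>k r. (if k = E1 then (if r = E1 then a E4 * P E1 E2 - a E2 * P E1 E4 else if r = E2 then - a E2 * P E2 E4 else if r = E4 then - a E4 * P E2 E4 else 0)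
     else if k = E2 then (if r = E1 then P E1 E4 * a E1 else if r = E2 then a E4 * P E1 E2 + a E1 * P E2 E4 else if r = E4 then a E4 * P E1 E4 else 0)
     else (if r = E1 then a E4 * a E1 else if r = E2 then a E4 * a E2 else if r = E4 then a E4 * a E4 else 0)))"
  have "alg_iso (Fm (\<lambda>i j. sV (\<lambda>p. sV (\<lambda>q. g p i * g q j * Q p q)) / ((a E4 * ?t) * ?t))) (FAM P a Q)"
  proof (rule vch_to_Fm)
    fix k i assume "isV k" "isV i"
    then show "sV (\<lambda>r. (H k r / DD) * g r i) = (if k = i then 1 else 0)"
      using t a4 by (intro inv_div; (simp add: DD_def; fail)?) (auto simp: g_def H_def DD_def sV_def tt_def algebra_simps elim!: isV.elims)
  next
    fix k i assume "isV k" "isV i"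
    then show "sV (\<lambda>r. g k r * (H r i / DD)) = (if k = i then 1 else 0)"
      using t a4 by (intro inv_div2; (simp add: DD_def; fail)?) (auto simp: g_def H_def DD_def sV_def tt_def algebra_simps elim!: isV.elims)
  next
    fix i j assume "isV i" "isV j"
    then show "sV (\<lambda>p. sV (\<lambda>q. g p i * g q j * P p q)) = (a E4 * ?t) * P0 i j"
      using alt by (auto simp: g_def sV_def tt_def P0_def altP_def algebra_simps elim!: isV.elims)
  next
    fix i assume "isV i"
    then show "sV (\<lambda>p. g p i * a p) = ?t * a0 i"
      by (auto simp: g_def sV_def tt_def a0_def algebra_simps elim!: isV.elims)
  qed (use t a4 in auto)
  then show ?thesis by (rule LIST_iso'[OF _ LIST_Fm])
qed

lemma LIST_FAM_a4z:
  assumes alt: "altP P" and t: "tt P a \<noteq> 0" and a4: "a E4 = 0"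
  shows "LIST (FAM P a Q)"
proof -
  let ?t = "tt P a"
  define g where "g = (\<lambda>k i. if i = E1 then (if k = E1 then - a E2 else if k = E2 then a E1 else 0)
     else if i = E2 then (if k = E4 then 1 else 0)
     else (if k = E1 then P E2 E4 else if k = E2 then - P E1 E4 else if k = E4 then P E1 E2 else 0))"
  define DD where "DD = ?t"
  define H where "H = (\<lambda>k r. (if k = E1 then (if r = E1 then P E1 E4 else if r = E2 then P E2 E4 else 0)
     else if k = E2 then (if r = E1 then - a E1 * P E1 E2 else if r = E2 then - a E2 * P E1 E2 else if r = E4 then ?t else 0)
     else (if r = E1 then a E1 else if r = E2 then a E2 else 0)))"
  have "alg_iso (Fm (\<lambda>i j. sV (\<lambda>p. sV (\<lambda>q. g p i * g q j * Q p q)) / (?t * ?t))) (FAM P a Q)"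
  proof (rule vch_to_Fm)
    fix k i assume "isV k" "isV i"
    then show "sV (\<lambda>r. (H k r / DD) * g r i) = (if k = i then 1 else 0)"
      using t a4 by (intro inv_div; (simp add: DD_def; fail)?) (auto simp: g_def H_def DD_def sV_def tt_def algebra_simps elim!: isV.elims)
  next
    fix k i assume "isV k" "isV i"
    then show "sV (\<lambda>r. g k r * (H r i / DD)) = (if k = i then 1 else 0)"
      using t a4 by (intro inv_div2; (simp add: DD_def; fail)?) (auto simp: g_def H_def DD_def sV_def tt_def algebra_simps elim!: isV.elims)
  next
    fix i j assume "isV i" "isV j"
    then show "sV (\<lambda>p. sV (\<lambda>q. g p i * g q j * P p q)) = ?t * P0 i j"
      using alt a4 by (auto simp: g_def sV_def tt_def P0_def altP_def algebra_simps elim!: isV.elims)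
  next
    fix i assume "isV i"
    then show "sV (\<lambda>p. g p i * a p) = ?t * a0 i"
      using a4 by (auto simp: g_def sV_def tt_def a0_def algebra_simps elim!: isV.elims)
  qed (use t in auto)
  then show ?thesis by (rule LIST_iso'[OF _ LIST_Fm])
qed

lemma LIST_FAM: "altP P \<Longrightarrow> tt P a \<noteq> 0 \<Longrightarrow> LIST (FAM P a Q)"
  using LIST_FAM_a4 LIST_FAM_a4z by blast



definition GEN :: "(idx \<Rightarrow> idx \<Rightarrow> complex) \<Rightarrow> (idx \<Rightarrow> idx \<Rightarrow> complex) \<Rightarrow> (idx \<Rightarrow> complex) \<Rightarrow> (idx \<Rightarrow> complex) \<Rightarrow> complex \<Rightarrow> sconst" where
  "GEN P Q a b \<mu> i j k = (if isV i \<and> isV j then (if k = E3 then P i j else if k = E5 then Q i j else 0)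
     else if i = E3 \<and> isV j then (if k = E5 then a j else 0)
     else if isV i \<and> j = E3 then (if k = E5 then b i else 0)
     else if i = E3 \<and> j = E3 then (if k = E5 then \<mu> else 0) else 0)"

definition BP :: "(idx \<Rightarrow> idx \<Rightarrow> complex) \<Rightarrow> vec5 \<Rightarrow> vec5 \<Rightarrow> complex" where
  "BP P x y = sV (\<lambda>i. sV (\<lambda>j. x i * y j * P i j))"
definition LA :: "(idx \<Rightarrow> complex) \<Rightarrow> vec5 \<Rightarrow> complex" where
  "LA a y = sV (\<lambda>j. y j * a j)"

lemma mul_GEN: "mul (GEN P Q a b \<mu>) x y = (\<lambda>k. if k = E3 then BP P x y
   else if k = E5 then BP Q x y + x E3 * LA a y + LA b x * y E3 + \<mu> * x E3 * y E3 else 0)"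
  by (rule ext, case_tac k) (simp_all add: mul_def sumU GEN_def BP_def LA_def sV_def algebra_simps)

lemma BP_zr: "(\<And>k. isV k \<Longrightarrow> w k = 0) \<Longrightarrow> BP P x w = 0"
  by (simp add: BP_def sV_def)
lemma BP_zl: "(\<And>k. isV k \<Longrightarrow> w k = 0) \<Longrightarrow> BP P w x = 0"
  by (simp add: BP_def sV_def)
lemma LA_z: "(\<And>k. isV k \<Longrightarrow> w k = 0) \<Longrightarrow> LA a w = 0"
  by (simp add: LA_def sV_def)

lemma leib_GEN: "(mul (GEN P Q a b \<mu>) (mul (GEN P Q a b \<mu>) x y) z =
    vadd (mul (GEN P Q a b \<mu>) (mul (GEN P Q a b \<mu>) x z) y) (mul (GEN P Q a b \<mu>) x (mul (GEN P Q a b \<mu>) y z)))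
  \<longleftrightarrow> BP P x y * (LA a z + \<mu> * z E3) = BP P x z * (LA a y + \<mu> * y E3) + (LA b x + \<mu> * x E3) * BP P y z"
proof -
  have z: "isV k \<Longrightarrow> mul (GEN P Q a b \<mu>) u v k = 0" for u v k
    by (cases k) (simp_all add: mul_GEN)
  have e3: "mul (GEN P Q a b \<mu>) u v E3 = BP P u v" for u v by (simp add: mul_GEN)
  have zl: "BP R (mul (GEN P Q a b \<mu>) u v) w = 0" for R u v w by (rule BP_zl) (simp add: z)
  have zr: "BP R w (mul (GEN P Q a b \<mu>) u v) = 0" for R u v w by (rule BP_zr) (simp add: z)
  have zla: "LA R (mul (GEN P Q a b \<mu>) u v) = 0" for R u v by (rule LA_z) (simp add: z)
  have "mul (GEN P Q a b \<mu>) (mul (GEN P Q a b \<mu>) u v) w = (\<lambda>k. if k = E5 then BP P u v * (LA a w + \<mu> * w E3) else 0)" for u v w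
    by (simp add: mul_GEN[of P Q a b \<mu> "mul (GEN P Q a b \<mu>) u v"] zl zla e3 algebra_simps fun_eq_iff)
  moreover have "mul (GEN P Q a b \<mu>) u (mul (GEN P Q a b \<mu>) v w) = (\<lambda>k. if k = E5 then (LA b u + \<mu> * u E3) * BP P v w else 0)" for u v w
    by (simp add: mul_GEN[of P Q a b \<mu> u "mul (GEN P Q a b \<mu>) v w"] zr zla e3 algebra_simps fun_eq_iff)
  ultimately show ?thesis
    by (simp add: vadd_def fun_eq_iff)
qed

definition TT :: "(idx \<Rightarrow> idx \<Rightarrow> complex) \<Rightarrow> (idx \<Rightarrow> complex) \<Rightarrow> (idx \<Rightarrow> complex) \<Rightarrow> vec5 \<Rightarrow> vec5 \<Rightarrow> vec5 \<Rightarrow> complex" where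
  "TT P a b x y z = BP P x y * LA a z - BP P x z * LA a y - LA b x * BP P y z"

lemma BP_addl: "BP P (x + y) z = BP P x z + BP P y z" by (simp add: BP_def sV_def algebra_simps)
lemma BP_addr: "BP P x (y + z) = BP P x y + BP P x z" by (simp add: BP_def sV_def algebra_simps)
lemma LA_add: "LA a (x + y) = LA a x + LA a y" by (simp add: LA_def sV_def algebra_simps)

definition dl :: "idx \<Rightarrow> vec5" where "dl i = (\<lambda>k. if k = i then 1 else 0)"

lemma BP_dl: "isV i \<Longrightarrow> isV j \<Longrightarrow> BP P (dl i) (dl j) = P i j"
  by (auto simp: BP_def sV_def dl_def elim!: isV.elims)
lemma LA_dl: "isV i \<Longrightarrow> LA a (dl i) = a i"
  by (auto simp: LA_def sV_def dl_def elim!: isV.elims)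

lemma BP_zeroP: "(\<And>i j. isV i \<Longrightarrow> isV j \<Longrightarrow> P i j = 0) \<Longrightarrow> BP P x y = 0"
  by (simp add: BP_def sV_def)

lemma partII:
  assumes bl: "binary_leibniz (GEN P Q a b \<mu>)" and nl: "\<not> leibniz (GEN P Q a b \<mu>)"
  shows "LIST (GEN P Q a b \<mu>)"
proof -
  let ?G = "GEN P Q a b \<mu>"
  have B: "BP P u v * (LA a w + \<mu> * w E3) = BP P u w * (LA a v + \<mu> * v E3) + (LA b u + \<mu> * u E3) * BP P v w"
    if "u \<in> gen2 ?G x y" "v \<in> gen2 ?G x y" "w \<in> gen2 ?G x y" for x y u v w
    using bl that unfolding binary_leibniz_def leibniz_on_def leib_GEN by blast
  obtain x0 y0 z0 where N: "\<not> (BP P x0 y0 * (LA a z0 + \<mu> * z0 E3) = BP P x0 z0 * (LA a y0 + \<mu> * y0 E3) + (LA b x0 + \<mu> * x0 E3) * BP P y0 z0)"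
    using nl unfolding leibniz_def leibniz_on_def leib_GEN by blast
  obtain p q where pq: "isV p" "isV q" "P p q \<noteq> 0"
    using N BP_zeroP[of P] by force
  have mu: "\<mu> = 0"
  proof -
    let ?x = "dl p" and ?y = "dl q"
    have "BP P ?x ?y * (LA a (mul ?G ?x ?y) + \<mu> * mul ?G ?x ?y E3) = BP P ?x (mul ?G ?x ?y) * (LA a ?y + \<mu> * ?y E3) + (LA b ?x + \<mu> * ?x E3) * BP P ?y (mul ?G ?x ?y)"
      by (rule B[of _ ?x ?y]) (auto intro: gen2.intros)
    moreover have "isV k \<Longrightarrow> mul ?G u v k = 0" for u v k by (cases k) (simp_all add: mul_GEN)
    ultimately have "P p q * (\<mu> * P p q) = 0"
      using pq by (simp add: BP_zr LA_z BP_dl mul_GEN)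
    then show ?thesis using pq by simp
  qed
  have T0: "TT P a b u v w = 0" if "u \<in> gen2 ?G x y" "v \<in> gen2 ?G x y" "w \<in> gen2 ?G x y" for x y u v w
    using B[OF that] mu by (simp add: TT_def algebra_simps)
  have Txxz: "TT P a b x x z = 0" for x z by (rule T0[of _ x z]) (auto intro: gen2.intros)
  have Txzx: "TT P a b x z x = 0" for x z by (rule T0[of _ x z]) (auto intro: gen2.intros)
  have Tzxx: "TT P a b z x x = 0" for x z by (rule T0[of _ x z]) (auto intro: gen2.intros)
  have TN: "TT P a b x0 y0 z0 \<noteq> 0" using N mu by (simp add: TT_def algebra_simps)
  have pol1: "TT P a b x y z = - TT P a b y x z" for x y z
  proof -
    have "TT P a b (x + y) (x + y) z = TT P a b x x z + TT P a b x y z + TT P a b y x z + TT P a b y y z"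
      by (simp add: TT_def BP_addl BP_addr LA_add algebra_simps)
    then show ?thesis using Txxz[of "x + y" z] Txxz[of x z] Txxz[of y z] by (simp add: eq_neg_iff_add_eq_0)
  qed
  have pol2: "TT P a b x y z = - TT P a b z y x" for x y z
  proof -
    have "TT P a b (x + z) y (x + z) = TT P a b x y x + TT P a b x y z + TT P a b z y x + TT P a b z y z"
      by (simp add: TT_def BP_addl BP_addr LA_add algebra_simps)
    then show ?thesis using Txzx[of "x + z" y] Txzx[of x y] Txzx[of z y] by (simp add: eq_neg_iff_add_eq_0)
  qed
  show ?thesis
  proof (cases "\<exists>r. isV r \<and> b r \<noteq> 0")
    case False
    then have b0: "LA b x = 0" for x by (auto simp: LA_def sV_def)
    have key: "LA a x * TT P a b x y z = 0" for x y z
    proof -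
      have 1: "BP P x x * LA a w = BP P x w * LA a x" for w
        using Txxz[of x w] b0 by (simp add: TT_def)
      have e1: "LA a x * BP P x y = BP P x x * LA a y" using 1[of y] by (simp add: mult.commute)
      have e2: "LA a x * BP P x z = BP P x x * LA a z" using 1[of z] by (simp add: mult.commute)
      have "LA a x * TT P a b x y z = (LA a x * BP P x y) * LA a z - (LA a x * BP P x z) * LA a y"
        by (simp add: TT_def b0 algebra_simps)
      then show ?thesis by (simp add: e1 e2)
    qed
    have "LA a x0 = 0" using key[of x0 y0 z0] TN by simp
    moreover have "LA a y0 = 0" using key[of y0 x0 z0] TN pol1[of x0 y0 z0] by auto
    moreover have "LA a z0 = 0" using key[of z0 y0 x0] TN pol2[of x0 y0 z0] by auto
    ultimately have "TT P a b x0 y0 z0 = 0" using b0 by (simp add: TT_def)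
    with TN show ?thesis by simp
  next
    case True
    then obtain r where r: "isV r" "b r \<noteq> 0" by blast
    have Pxx: "BP P x x = 0" for x
      using Tzxx[of "dl r" x] r by (simp add: TT_def LA_dl)
    have alt: "altP P"
    proof -
      have d: "P i i = 0" if "isV i" for i using Pxx[of "dl i"] BP_dl[OF that that] by simp
      have o: "P i j + P j i = 0" if "isV i" "isV j" for i j
        using Pxx[of "dl i + dl j"] that d by (simp add: BP_addl BP_addr BP_dl add.commute)
      show ?thesis unfolding altP_def using d o
        by (simp add: eq_neg_iff_add_eq_0 add.commute)
    qed
    let ?c = "\<lambda>i. a i + b i"
    have cz: "BP P x z * LA ?c x = 0" for x z
    proof -
      have "TT P a b x x z = - (BP P x z * LA ?c x)" using Pxx[of x] by (simp add: TT_def LA_def sV_def algebra_simps)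
      then show ?thesis using Txxz[of x z] by simp
    qed
    have cpol: "BP P x z * LA ?c y + BP P y z * LA ?c x = 0" for x y z
    proof -
      have "BP P (x + y) z * LA ?c (x + y) = BP P x z * LA ?c x + BP P y z * LA ?c y + (BP P x z * LA ?c y + BP P y z * LA ?c x)"
        by (simp add: BP_addl LA_add algebra_simps)
      then show ?thesis using cz[of "x + y" z] cz[of x z] cz[of y z] by simp
    qed
    have cp: "?c p = 0" using cz[of "dl p" "dl q"] pq by (simp add: BP_dl LA_dl del: LA_def)
    have c0: "?c i = 0" if "isV i" for i
    proof -
      have "P i q * ?c p + P p q * ?c i = 0"
        using cpol[of "dl i" "dl q" "dl p"] that pq by (simp add: BP_dl LA_dl del: LA_def)
      then have "P p q * ?c i = 0" using cp by simp
      then show ?thesis using pq by simp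
    qed
    have bneg: "b i = - a i" if "isV i" for i using c0[OF that] by (simp add: eq_neg_iff_add_eq_0 add.commute)
    have "TT P a b x y z = tt P a * (x E1 * (y E2 * z E4 - y E4 * z E2) - x E2 * (y E1 * z E4 - y E4 * z E1) + x E4 * (y E1 * z E2 - y E2 * z E1))" for x y z
      using alt bneg[of E1] bneg[of E2] bneg[of E4]
      by (simp add: TT_def BP_def LA_def sV_def tt_def altP_def algebra_simps)
    then have t: "tt P a \<noteq> 0" using TN by auto
    have "GEN P Q a b \<mu> = FAM P a Q"
      unfolding GEN_def FAM_def using mu bneg by (intro ext) (auto)
    then show ?thesis using LIST_FAM[OF alt t] by simp
  qed
qed



lemma vscale_zero: "vscale 0 x = vzero" by (simp add: vscale_def vzero_def)

lemma binary_transfer: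
  assumes iso: "alg_iso d c" and bl: "binary_leibniz c"
  shows "binary_leibniz d"
proof -
  obtain f where f: "bij f" "\<forall>x y. f (vadd x y) = vadd (f x) (f y)"
    "\<forall>a x. f (vscale a x) = vscale a (f x)" "\<forall>x y. f (mul d x y) = mul c (f x) (f y)"
    using iso unfolding alg_iso_def by blast
  have "f vzero = f (vscale 0 vzero)" by (simp add: vscale_zero)
  also have "\<dots> = vscale 0 (f vzero)" using f(3) by blast
  finally have f0: "f vzero = vzero" by (simp add: vscale_zero)
  have img: "u \<in> gen2 d x y \<Longrightarrow> f u \<in> gen2 c (f x) (f y)" for u x y
  proof (induction u rule: gen2.induct)
    case gen_x then show ?case by (rule gen2.gen_x)
  next
    case gen_y then show ?case by (rule gen2.gen_y)
  next
    case gen_zero then show ?case unfolding f0 by (rule gen2.gen_zero)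
  next
    case (gen_add a b) then show ?case using f(2) gen2.gen_add by metis
  next
    case (gen_scale a t) then show ?case using f(3) gen2.gen_scale by metis
  next
    case (gen_mul a b) then show ?case using f(4) gen2.gen_mul by metis
  qed
  have inj: "inj f" by (rule bij_is_inj[OF f(1)])
  show ?thesis unfolding binary_leibniz_def leibniz_on_def
  proof (intro allI ballI)
    fix x y u v w assume uvw: "u \<in> gen2 d x y" "v \<in> gen2 d x y" "w \<in> gen2 d x y"
    have "mul c (mul c (f u) (f v)) (f w) = vadd (mul c (mul c (f u) (f w)) (f v)) (mul c (f u) (mul c (f v) (f w)))"
      using bl img[OF uvw(1)] img[OF uvw(2)] img[OF uvw(3)]
      unfolding binary_leibniz_def leibniz_on_def by blast
    then have "f (mul d (mul d u v) w) = f (vadd (mul d (mul d u w) v) (mul d u (mul d v w)))"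
      by (simp add: f)
    then show "mul d (mul d u v) w = vadd (mul d (mul d u w) v) (mul d u (mul d v w))"
      using inj by (simp add: inj_eq)
  qed
qed

lemma leibniz_transfer:
  assumes iso: "alg_iso d c" and l: "leibniz d"
  shows "leibniz c"
proof -
  obtain f where f: "bij f" "\<forall>x y. f (vadd x y) = vadd (f x) (f y)"
    "\<forall>a x. f (vscale a x) = vscale a (f x)" "\<forall>x y. f (mul d x y) = mul c (f x) (f y)"
    using iso unfolding alg_iso_def by blast
  have s: "\<exists>x'. x = f x'" for x using f(1) by (meson bij_is_surj surj_f_inv_f[symmetric])
  show ?thesis unfolding leibniz_def leibniz_on_def
  proof (intro ballI)
    fix x y z :: vec5
    obtain x' y' z' where "x = f x'" "y = f y'" "z = f z'" using s by metis
    moreover have "mul d (mul d x' y') z' = vadd (mul d (mul d x' z') y') (mul d x' (mul d y' z'))"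
      using l unfolding leibniz_def leibniz_on_def by blast
    then have "f (mul d (mul d x' y') z') = f (vadd (mul d (mul d x' z') y') (mul d x' (mul d y' z')))"
      by simp
    ultimately show "mul c (mul c x y) z = vadd (mul c (mul c x z) y) (mul c x (mul c y z))"
      by (simp add: f)
  qed
qed



lemma fsum_apply: "(sum f A) k = sum (\<lambda>i. f i k) A"
  by (induct A rule: infinite_finite_induct) auto

lemma vec_decomp: "x = (\<Sum>i\<in>UNIV. vscale (x i) (dl i))"
proof
  fix k
  have "(\<Sum>i\<in>UNIV. vscale (x i) (dl i)) k = (\<Sum>i\<in>UNIV. if k = i then x i else 0)"
    by (simp add: fsum_apply vscale_def dl_def if_distrib cong: if_cong)
  then show "x k = (\<Sum>i\<in>UNIV. vscale (x i) (dl i)) k" by simp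
qed

lemma inj_dl: "inj dl"
  by (rule injI) (metis dl_def zero_neq_one)

interpretation fv: finite_dimensional_vector_space vscale "range dl"
proof unfold_locales
  show "vscale a (x + y) = vscale a x + vscale a y" for a x y
    by (simp add: vscale_def fun_eq_iff algebra_simps)
  show "vscale (a + b) x = vscale a x + vscale b x" for a b x
    by (simp add: vscale_def fun_eq_iff algebra_simps)
  show "vscale a (vscale b x) = vscale (a * b) x" for a b x
    by (simp add: vscale_def fun_eq_iff algebra_simps)
  show "vscale 1 x = x" for x by (simp add: vscale_def)
  show "finite (range dl)" by simp
next
  interpret vs: vector_space vscale
    by unfold_locales (simp_all add: vscale_def fun_eq_iff algebra_simps)
  show "vs.span (range dl) = UNIV"
  proof (intro set_eqI iffI)
    fix x :: vec5
    have "(\<Sum>i\<in>UNIV. vscale (x i) (dl i)) \<in> vs.span (range dl)"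
      by (intro vs.span_sum vs.span_scale vs.span_base) auto
    then show "x \<in> vs.span (range dl)" using vec_decomp[of x] by simp
  qed auto
  show "vs.independent (range dl)"
    unfolding vs.dependent_finite[OF finite_imageI[OF finite_UNIV]]
  proof (intro notI, elim exE conjE bexE)
    fix u v assume h: "(\<Sum>v\<in>range dl. vscale (u v) v) = 0" and v: "v \<in> range dl" and nz: "u v \<noteq> 0"
    then obtain k where k: "v = dl k" by auto
    have "(\<Sum>i\<in>UNIV. vscale (u (dl i)) (dl i)) = 0"
      using h by (simp add: sum.reindex[OF inj_dl])
    then have "(\<Sum>i\<in>UNIV. vscale (u (dl i)) (dl i)) k = 0" by simp
    then have "(\<Sum>i\<in>UNIV. if k = i then u (dl i) else 0) = 0"
      by (simp add: fsum_apply vscale_def dl_def if_distrib cong: if_cong)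
    then show False using k nz by simp
  qed
qed

lemma card_idx: "card (UNIV :: idx set) = 5" by (simp add: UNIV_idx)

lemma dim_UNIV5: "fv.dim (UNIV :: vec5 set) = 5"
  using fv.dim_UNIV card_image[OF inj_dl] card_idx by simp

lemma mul_addl: "mul c (x + y) z = mul c x z + mul c y z"
  by (simp add: mul_def fun_eq_iff sum.distrib algebra_simps)
lemma mul_addr: "mul c x (y + z) = mul c x y + mul c x z"
  by (simp add: mul_def fun_eq_iff sum.distrib algebra_simps)
lemma mul_scalel: "mul c (vscale a x) y = vscale a (mul c x y)"
  by (simp add: mul_def vscale_def fun_eq_iff sum_distrib_left algebra_simps)
lemma mul_scaler: "mul c x (vscale a y) = vscale a (mul c x y)"
  by (simp add: mul_def vscale_def fun_eq_iff sum_distrib_left algebra_simps)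
lemma mul_0l: "mul c 0 y = 0" by (simp add: mul_def fun_eq_iff)
lemma mul_0r: "mul c x 0 = 0" by (simp add: mul_def fun_eq_iff)
lemma mul_diffl: "mul c (x - y) z = mul c x z - mul c y z"
  by (simp add: mul_def fun_eq_iff sum_subtractf algebra_simps)
lemma mul_diffr: "mul c x (y - z) = mul c x y - mul c x z"
  by (simp add: mul_def fun_eq_iff sum_subtractf algebra_simps)

lemma mul_span_l:
  assumes "x \<in> fv.span X" "\<And>u. u \<in> X \<Longrightarrow> mul c u y \<in> fv.span Z"
  shows "mul c x y \<in> fv.span Z"
  using assms(1)
proof (induction rule: fv.span_induct_alt)
  case base then show ?case by (subst mul_0l) (rule fv.span_zero)
next
  case (step a u w)
  then show ?case using assms(2)[OF step(1)]
    by (metis mul_addl mul_scalel fv.span_add fv.span_scale)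
qed

lemma mul_span_r:
  assumes "y \<in> fv.span Y" "\<And>v. v \<in> Y \<Longrightarrow> mul c x v \<in> fv.span Z"
  shows "mul c x y \<in> fv.span Z"
  using assms(1)
proof (induction rule: fv.span_induct_alt)
  case base then show ?case by (subst mul_0r) (rule fv.span_zero)
next
  case (step a u w)
  then show ?case using assms(2)[OF step(1)]
    by (metis mul_addr mul_scaler fv.span_add fv.span_scale)
qed

lemma is_prod_ge1: "is_prod c n p \<Longrightarrow> 1 \<le> n"
  by (induction rule: is_prod.induct) auto

lemma is_prod_collapse: "is_prod c n p \<Longrightarrow> 1 \<le> j \<Longrightarrow> j \<le> n \<Longrightarrow> is_prod c j p"
proof (induction arbitrary: j rule: is_prod.induct)
  case (prod_one x) then have "j = 1" by simp
  then show ?case using is_prod.prod_one by blast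
next
  case (prod_mul m a n b)
  show ?case
  proof (cases "j = 1")
    case True then show ?thesis using is_prod.prod_one by blast
  next
    case False
    have m: "1 \<le> m" using is_prod_ge1[OF prod_mul(1)] .
    have n: "1 \<le> n" using is_prod_ge1[OF prod_mul(2)] .
    define j1 where "j1 = min m (j - 1)"
    define j2 where "j2 = j - j1"
    have "is_prod c j1 a" using prod_mul.prems False m by (intro prod_mul.IH(1)) (auto simp: j1_def)
    moreover have "is_prod c j2 b" using prod_mul.prems False m n by (intro prod_mul.IH(2)) (auto simp: j1_def j2_def)
    ultimately have "is_prod c (j1 + j2) (mul c a b)" by (rule is_prod.prod_mul)
    moreover have "j1 + j2 = j" using False prod_mul.prems by (auto simp: j1_def j2_def)
    ultimately show ?thesis by simp
  qed
qed

lemma nilp_all: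
  assumes "nilpotent_alg c"
  obtains N where "1 \<le> N" "\<And>m p. N \<le> m \<Longrightarrow> is_prod c m p \<Longrightarrow> p = 0"
proof -
  obtain N where N: "N \<ge> 1" "\<forall>p. is_prod c N p \<longrightarrow> p = vzero"
    using assms unfolding nilpotent_alg_def by auto
  show ?thesis
  proof (rule that[OF N(1)])
    fix m p assume "N \<le> m" "is_prod c m p"
    then have "is_prod c N p" using N(1) by (intro is_prod_collapse[of c m p N]) auto
    then show "p = 0" using N(2) by (simp add: vzero_eq)
  qed
qed

definition Nk :: "sconst \<Rightarrow> nat \<Rightarrow> vec5 set" where
  "Nk c k = fv.span {p. is_prod c k p}"

lemma Nk_mul: "x \<in> Nk c i \<Longrightarrow> y \<in> Nk c j \<Longrightarrow> mul c x y \<in> Nk c (i + j)"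
  unfolding Nk_def
  apply (erule mul_span_l)
  apply (erule mul_span_r)
  by (rule fv.span_base) (auto intro: is_prod.prod_mul)

lemma Nk_mono: "1 \<le> j \<Longrightarrow> j \<le> k \<Longrightarrow> Nk c k \<subseteq> Nk c j"
  unfolding Nk_def by (rule fv.span_mono) (use is_prod_collapse[of c k _ j] in blast)

lemma Nk_base: "is_prod c k p \<Longrightarrow> p \<in> Nk c k"
  unfolding Nk_def by (rule fv.span_base) simp

lemma Nk_1: "x \<in> Nk c 1" by (rule Nk_base) (rule is_prod.prod_one)

lemma Nk_subspace: "fv.subspace (Nk c k)" unfolding Nk_def by simp

lemma Nk_zero: "(\<And>p. is_prod c k p \<Longrightarrow> p = 0) \<Longrightarrow> Nk c k = {0}"
proof -
  assume h: "\<And>p. is_prod c k p \<Longrightarrow> p = 0"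
  have "{p. is_prod c k p} \<subseteq> {0}" using h by auto
  then have "Nk c k \<subseteq> fv.span {0}" unfolding Nk_def by (rule fv.span_mono)
  then show ?thesis using fv.span_zero[of "{p. is_prod c k p}"] by (auto simp: Nk_def)
qed



lemma prod3_cases:
  assumes "is_prod c 3 q"
  obtains a b where "q = mul c a b" "is_prod c 2 a"
    | a b where "q = mul c a b" "is_prod c 2 b"
  using assms
proof (cases rule: is_prod.cases)
  case (prod_mul m a n b)
  have "1 \<le> m" "1 \<le> n" using is_prod_ge1 prod_mul by blast+
  then have "m = 2 \<or> n = 2" using prod_mul(1) by arith
  then show ?thesis using prod_mul that by blast
qed simp

lemma all3_zero_leibniz:
  assumes "\<And>p. is_prod c 3 p \<Longrightarrow> p = 0"
  shows "leibniz c"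
  unfolding leibniz_def leibniz_on_def
proof (intro ballI)
  fix x y z
  have p2: "is_prod c 2 (mul c u v)" for u v
    using is_prod.prod_mul[OF is_prod.prod_one is_prod.prod_one, of c u v] by (simp add: numeral_2_eq_2)
  have l: "is_prod c 3 (mul c (mul c u v) w)" for u v w
    using is_prod.prod_mul[OF p2[of u v] is_prod.prod_one[of c w]] by simp
  have r: "is_prod c 3 (mul c u (mul c v w))" for u v w
    using is_prod.prod_mul[OF is_prod.prod_one[of c u] p2[of v w]] by (simp add: numeral_3_eq_3)
  show "mul c (mul c x y) z = vadd (mul c (mul c x z) y) (mul c x (mul c y z))"
    using assms[OF l[of x y z]] assms[OF l[of x z y]] assms[OF r[of x y z]]
    by (simp add: vadd_eq)
qed

lemma gen_lemma:
  assumes nil: "nilpotent_alg c"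
    and sp: "\<And>v. \<exists>\<alpha> \<beta>. v - (vscale \<alpha> x + vscale \<beta> y) \<in> Nk c 2"
  shows "v \<in> gen2 c x y"
proof -
  let ?B = "gen2 c x y"
  have Badd: "a \<in> ?B \<Longrightarrow> b \<in> ?B \<Longrightarrow> a + b \<in> ?B" for a b
    using gen2.gen_add[of a c x y b] by (simp add: vadd_eq)
  have Bsc: "a \<in> ?B \<Longrightarrow> vscale t a \<in> ?B" for a t by (rule gen2.gen_scale)
  have B0: "0 \<in> ?B" using gen2.gen_zero[of c x y] by (simp add: vzero_eq)
  have Bmul: "a \<in> ?B \<Longrightarrow> b \<in> ?B \<Longrightarrow> mul c a b \<in> ?B" for a b by (rule gen2.gen_mul)
  have C: "\<forall>v. \<exists>b\<in>?B. v - b \<in> Nk c k" if "1 \<le> k" for k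
    using that
  proof (induction k rule: less_induct)
    case (less k)
    show ?case
    proof (cases "k \<le> 2")
      case True
      show ?thesis
      proof
        fix v
        show "\<exists>b\<in>?B. v - b \<in> Nk c k"
        proof (cases "k = 1")
          case True then show ?thesis using B0 Nk_1 by blast
        next
          case False
          then have k2: "k = 2" using True less.prems by arith
          obtain \<alpha> \<beta> where "v - (vscale \<alpha> x + vscale \<beta> y) \<in> Nk c 2" using sp by blast
          moreover have "vscale \<alpha> x + vscale \<beta> y \<in> ?B"
            by (intro Badd Bsc gen2.gen_x gen2.gen_y)
          ultimately show ?thesis using k2 by blast
        qed
      qed
    next
      case False
      define k' where "k' = k - 1"
      have k': "k = k' + 1" "2 \<le> k'" using False by (auto simp: k'_def)
      let ?W = "{v. \<exists>b\<in>?B. v - b \<in> Nk c k}"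
      have Wsub: "fv.subspace ?W"
        unfolding fv.subspace_def
      proof (intro conjI ballI allI)
        have "(0::vec5) - 0 \<in> Nk c k" by (simp add: Nk_def fv.span_zero)
        then show "0 \<in> ?W" using B0 by blast
      next
        fix u w assume "u \<in> ?W" "w \<in> ?W"
        then obtain b1 b2 where "b1 \<in> ?B" "u - b1 \<in> Nk c k" "b2 \<in> ?B" "w - b2 \<in> Nk c k" by blast
        moreover have "(u + w) - (b1 + b2) = (u - b1) + (w - b2)" by simp
        ultimately show "u + w \<in> ?W"
          using Badd Nk_subspace[of c k] unfolding fv.subspace_def by (metis (mono_tags, lifting) mem_Collect_eq)
      next
        fix t u assume "u \<in> ?W"
        then obtain b1 where "b1 \<in> ?B" "u - b1 \<in> Nk c k" by blast
        moreover have "vscale t u - vscale t b1 = vscale t (u - b1)" by (simp add: vscale_def fun_eq_iff algebra_simps)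
        ultimately show "vscale t u \<in> ?W"
          using Bsc Nk_subspace[of c k] unfolding fv.subspace_def by (metis (mono_tags, lifting) mem_Collect_eq)
      qed
      have prods: "p \<in> ?W" if "is_prod c k' p" for p
        using that
      proof (cases rule: is_prod.cases)
        case prod_one then show ?thesis using k' by simp
      next
        case (prod_mul m q n r)
        have m: "1 \<le> m" "1 \<le> n" using is_prod_ge1 prod_mul by blast+
        have "\<forall>v. \<exists>b\<in>?B. v - b \<in> Nk c (m + 1)"
          by (rule less.IH) (use prod_mul m k' in auto)
        then obtain b where b: "b \<in> ?B" "q - b \<in> Nk c (m + 1)" by blast
        have "\<forall>v. \<exists>b\<in>?B. v - b \<in> Nk c (n + 1)"
          by (rule less.IH) (use prod_mul m k' in auto)
        then obtain b' where b': "b' \<in> ?B" "r - b' \<in> Nk c (n + 1)" by blast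
        have eq: "p - mul c b b' = mul c q (r - b') + mul c (q - b) r - mul c (q - b) (r - b')"
          using prod_mul by (simp add: mul_diffl mul_diffr)
        have 1: "mul c q (r - b') \<in> Nk c k"
          using Nk_mul[OF Nk_base[OF prod_mul(3)] b'(2)] prod_mul k' by (simp add: add.assoc)
        have 2: "mul c (q - b) r \<in> Nk c k"
          using Nk_mul[OF b(2) Nk_base[OF prod_mul(4)]] prod_mul k' by simp
        have 3: "mul c (q - b) (r - b') \<in> Nk c k"
          using Nk_mul[OF b(2) b'(2)] Nk_mono[of k "m + 1 + (n + 1)" c] prod_mul k' by auto
        have "p - mul c b b' \<in> Nk c k"
          unfolding eq using 1 2 3 Nk_subspace[of c k] unfolding Nk_def
          by (intro fv.span_add fv.span_diff) auto
        then show ?thesis using Bmul[OF b(1) b'(1)] by blast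
      qed
      have NW: "Nk c k' \<subseteq> ?W"
        unfolding Nk_def[of c k'] by (rule fv.span_minimal) (use prods Wsub in auto)
      show ?thesis
      proof
        fix v
        have "\<forall>v. \<exists>b\<in>?B. v - b \<in> Nk c k'"
          by (rule less.IH) (use k' in auto)
        then obtain b0 where b0: "b0 \<in> ?B" "v - b0 \<in> Nk c k'" by blast
        then obtain b1 where "b1 \<in> ?B" "(v - b0) - b1 \<in> Nk c k" using NW by blast
        moreover have "(v - b0) - b1 = v - (b0 + b1)" by simp
        ultimately show "\<exists>b\<in>?B. v - b \<in> Nk c k" using Badd[OF b0(1)] by metis
      qed
    qed
  qed
  obtain N where N: "1 \<le> N" "\<And>m p. N \<le> m \<Longrightarrow> is_prod c m p \<Longrightarrow> p = 0"
    using nilp_all[OF nil] by blast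
  have "Nk c N = {0}" by (rule Nk_zero) (use N in auto)
  then obtain b where "b \<in> ?B" "v - b = 0" using C[OF N(1)] by blast
  then show ?thesis by simp
qed



lemma vscale_eq_0: "vscale a p = 0 \<Longrightarrow> p \<noteq> 0 \<Longrightarrow> a = 0"
proof -
  assume h: "vscale a p = 0" "p \<noteq> 0"
  then obtain k where "p k \<noteq> 0" by (auto simp: fun_eq_iff)
  moreover have "a * p k = 0" using fun_cong[OF h(1), of k] by (simp add: vscale_def)
  ultimately show "a = 0" by simp
qed

lemma annih_l:
  assumes nil: "nilpotent_alg c" and p: "is_prod c k p" and sp: "\<And>d. mul c p d \<in> fv.span {p}"
  shows "mul c p d = 0"
proof -
  obtain N where N: "1 \<le> N" "\<And>m q. N \<le> m \<Longrightarrow> is_prod c m q \<Longrightarrow> q = 0"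
    using nilp_all[OF nil] by blast
  obtain l where l: "mul c p d = vscale l p" using sp[of d] by (auto simp: fv.span_singleton)
  define s where "s n = ((\<lambda>z. mul c z d) ^^ n) p" for n
  have sp: "is_prod c (k + n) (s n)" for n
  proof (induction n)
    case 0 then show ?case using p by (simp add: s_def)
  next
    case (Suc n)
    have "is_prod c (k + n + 1) (mul c (s n) d)" by (rule is_prod.prod_mul[OF Suc is_prod.prod_one])
    then show ?case by (simp add: s_def)
  qed
  have sv: "s n = vscale (l ^ n) p" for n
  proof (induction n)
    case 0 then show ?case by (simp add: s_def vscale_def)
  next
    case (Suc n)
    have "s (Suc n) = mul c (s n) d" by (simp add: s_def)
    also have "\<dots> = vscale (l ^ n) (vscale l p)" using Suc by (simp add: mul_scalel l)
    also have "\<dots> = vscale (l ^ Suc n) p" by (simp add: vscale_def fun_eq_iff algebra_simps)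
    finally show ?case .
  qed
  have "s N = 0" using N(2)[OF _ sp[of N]] by simp
  then have z: "vscale (l ^ N) p = 0" using sv by simp
  show ?thesis
  proof (cases "p = 0")
    case True then show ?thesis by (simp add: mul_0l)
  next
    case False
    then have "l ^ N = 0" using vscale_eq_0[OF z] by simp
    then have "l = 0" by simp
    then show ?thesis using l by (simp add: vscale_def fun_eq_iff)
  qed
qed

lemma annih_r:
  assumes nil: "nilpotent_alg c" and p: "is_prod c k p" and sp: "\<And>d. mul c d p \<in> fv.span {p}"
  shows "mul c d p = 0"
proof -
  obtain N where N: "1 \<le> N" "\<And>m q. N \<le> m \<Longrightarrow> is_prod c m q \<Longrightarrow> q = 0"
    using nilp_all[OF nil] by blast
  obtain l where l: "mul c d p = vscale l p" using sp[of d] by (auto simp: fv.span_singleton)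
  define s where "s n = ((\<lambda>z. mul c d z) ^^ n) p" for n
  have sp: "is_prod c (1 + (k + n)) (s (Suc n))" for n
  proof (induction n)
    case 0 then show ?case using is_prod.prod_mul[OF is_prod.prod_one p] by (simp add: s_def)
  next
    case (Suc n)
    have "is_prod c (1 + (1 + (k + n))) (mul c d (s (Suc n)))" by (rule is_prod.prod_mul[OF is_prod.prod_one Suc])
    then show ?case by (simp add: s_def)
  qed
  have sv: "s n = vscale (l ^ n) p" for n
  proof (induction n)
    case 0 then show ?case by (simp add: s_def vscale_def)
  next
    case (Suc n)
    have "s (Suc n) = mul c d (s n)" by (simp add: s_def)
    also have "\<dots> = vscale (l ^ n) (vscale l p)" using Suc by (simp add: mul_scaler l)
    also have "\<dots> = vscale (l ^ Suc n) p" by (simp add: vscale_def fun_eq_iff algebra_simps)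
    finally show ?case .
  qed
  have "s (Suc N) = 0" using N(2)[OF _ sp[of N]] by simp
  then have z: "vscale (l ^ Suc N) p = 0" using sv by simp
  show ?thesis
  proof (cases "p = 0")
    case True then show ?thesis by (simp add: mul_0r)
  next
    case False
    then have "l ^ Suc N = 0" using vscale_eq_0[OF z] by simp
    then have "l = 0" by (meson power_eq_0_iff)
    then show ?thesis using l by (simp add: vscale_def fun_eq_iff)
  qed
qed

lemma card_le2: "finite A \<Longrightarrow> card A \<le> 2 \<Longrightarrow> \<exists>x y. A \<subseteq> {x, y}"
proof -
  assume f: "finite A" and c: "card A \<le> 2"
  have "card A = 0 \<or> card A = 1 \<or> card A = 2" using c by arith
  then show ?thesis
  proof (elim disjE)
    assume "card A = 0" then show ?thesis using f by auto
  next
    assume "card A = 1" then show ?thesis by (auto simp: card_1_singleton_iff)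
  next
    assume "card A = 2" then show ?thesis by (auto simp: card_2_iff)
  qed
qed



lemma sub32: "is_prod c 3 p \<Longrightarrow> is_prod c 2 p"
  by (rule is_prod_collapse[of c 3 p 2]) auto

lemma vscale_0r: "vscale k (0::vec5) = 0" by (simp add: vscale_def fun_eq_iff)

lemma S_span: "fv.span (Nk c k) = Nk c k"
  unfolding Nk_def by (rule fv.span_span)

lemma partI_caseA:
  assumes nil: "nilpotent_alg c" and bl: "binary_leibniz c" and nl: "\<not> leibniz c"
  shows "\<not> 3 \<le> fv.dim (Nk c 2)"
proof
  assume d3: "3 \<le> fv.dim (Nk c 2)"
  let ?S = "Nk c 2"
  obtain BS where BS: "BS \<subseteq> ?S" "fv.independent BS" "?S \<subseteq> fv.span BS" "card BS = fv.dim ?S"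
    by (rule fv.basis_exists)
  obtain B where B: "BS \<subseteq> B" "fv.independent B" "UNIV \<subseteq> fv.span B"
    using fv.maximal_independent_subset_extend[of BS UNIV] BS(2) by auto
  have cB: "card B = 5" using fv.basis_card_eq_dim[of B UNIV] B dim_UNIV5 by simp
  have fB: "finite B" using fv.finiteI_independent[OF B(2)] .
  have fBS: "finite BS" using fB B(1) finite_subset by blast
  have "card (B - BS) = card B - card BS" using card_Diff_subset[OF fBS B(1)] .
  then have "card (B - BS) \<le> 2" using cB BS(4) d3 by simp
  then obtain x y where xy: "B - BS \<subseteq> {x, y}" using card_le2[of "B - BS"] fB by blast
  have sp: "\<exists>\<alpha> \<beta>. v - (vscale \<alpha> x + vscale \<beta> y) \<in> Nk c 2" for v
  proof -
    have "v \<in> fv.span B" using B(3) by auto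
    moreover have "B \<subseteq> insert x (insert y BS)" using xy by auto
    ultimately have "v \<in> fv.span (insert x (insert y BS))" using fv.span_mono by blast
    then obtain \<alpha> where "v - vscale \<alpha> x \<in> fv.span (insert y BS)" using fv.span_breakdown_eq by blast
    then obtain \<beta> where \<beta>: "(v - vscale \<alpha> x) - vscale \<beta> y \<in> fv.span BS" using fv.span_breakdown_eq by blast
    have sub: "fv.span BS \<subseteq> ?S" using fv.span_minimal[OF BS(1) Nk_subspace] .
    have eq: "v - (vscale \<alpha> x + vscale \<beta> y) = (v - vscale \<alpha> x) - vscale \<beta> y" by (simp add: algebra_simps)
    have "v - (vscale \<alpha> x + vscale \<beta> y) \<in> ?S" unfolding eq using \<beta> sub by blast
    then show ?thesis by blast
  qed
  have "v \<in> gen2 c x y" for v by (rule gen_lemma[OF nil sp])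
  then have "leibniz c" using bl unfolding binary_leibniz_def leibniz_on_def leibniz_def by blast
  with nl show False by simp
qed

lemma partI_caseB:
  assumes nil: "nilpotent_alg c" and nl: "\<not> leibniz c"
  shows "\<not> fv.dim (Nk c 2) \<le> 1"
proof
  assume d1: "fv.dim (Nk c 2) \<le> 1"
  let ?S = "Nk c 2"
  show False
  proof (cases "\<forall>p. is_prod c 2 p \<longrightarrow> p = 0")
    case True
    then have "leibniz c" by (intro all3_zero_leibniz) (auto dest: sub32)
    with nl show False by simp
  next
    case False
    then obtain p where p: "is_prod c 2 p" "p \<noteq> 0" by blast
    have pS: "p \<in> ?S" by (rule Nk_base[OF p(1)])
    have "fv.dim {p} = 1" using p(2) by simp
    then have "fv.span {p} = fv.span ?S" using fv.dim_eq_span[of "{p}" ?S] pS d1 by simp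
    then have spS: "fv.span {p} = ?S" by (simp add: S_span)
    have inS: "mul c u v \<in> ?S" for u v using Nk_mul[OF Nk_1[of u c] Nk_1[of v c]] by (simp add: numeral_2_eq_2)
    have l0: "mul c p d = 0" for d by (rule annih_l[OF nil p(1)]) (simp add: spS inS)
    have r0: "mul c d p = 0" for d by (rule annih_r[OF nil p(1)]) (simp add: spS inS)
    have inSp: "a \<in> ?S \<Longrightarrow> \<exists>k. a = vscale k p" for a using spS by (auto simp: fv.span_singleton)
    have "q = 0" if q: "is_prod c 3 q" for q
      using q
    proof (cases rule: prod3_cases)
      case (1 a b)
      obtain k where "a = vscale k p" using inSp[OF Nk_base[OF 1(2)]] by blast
      then show ?thesis using 1 l0 by (simp add: mul_scalel vscale_0r)
    next
      case (2 a b)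
      obtain k where "b = vscale k p" using inSp[OF Nk_base[OF 2(2)]] by blast
      then show ?thesis using 2 r0 by (simp add: mul_scaler vscale_0r)
    qed
    then have "leibniz c" by (rule all3_zero_leibniz)
    with nl show False by simp
  qed
qed



definition allowed :: "idx \<Rightarrow> idx \<Rightarrow> idx \<Rightarrow> bool" where
  "allowed i j k \<longleftrightarrow> (k = E3 \<and> isV i \<and> isV j) \<or> (k = E5 \<and> i \<noteq> E5 \<and> j \<noteq> E5)"

lemma TS: "Nk c 3 \<subseteq> Nk c 2" by (rule Nk_mono) auto

lemma caseC_TS:
  assumes nil: "nilpotent_alg c" and d2: "fv.dim (Nk c 2) = 2"
  shows "\<not> Nk c 2 \<subseteq> Nk c 3"
proof
  assume ST: "Nk c 2 \<subseteq> Nk c 3"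
  have all: "Nk c 2 \<subseteq> Nk c k" if "2 \<le> k" for k
    using that
  proof (induction k rule: dec_induct)
    case base then show ?case by simp
  next
    case (step k)
    have "Nk c 3 \<subseteq> Nk c (Suc k)"
      unfolding Nk_def[of c 3]
    proof (rule fv.span_minimal)
      show "fv.subspace (Nk c (Suc k))" by (rule Nk_subspace)
      show "{p. is_prod c 3 p} \<subseteq> Nk c (Suc k)"
      proof
        fix q assume "q \<in> {p. is_prod c 3 p}"
        then have "is_prod c 3 q" by simp
        then show "q \<in> Nk c (Suc k)"
        proof (cases rule: prod3_cases)
          case (1 a b)
          have "a \<in> Nk c k" using step.IH Nk_base[OF 1(2)] by blast
          then show ?thesis using Nk_mul[OF _ Nk_1[of b c], of a k] 1 by simp
        next
          case (2 a b)
          have "b \<in> Nk c k" using step.IH Nk_base[OF 2(2)] by blast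
          then show ?thesis using Nk_mul[OF Nk_1[of a c], of b k] 2 by simp
        qed
      qed
    qed
    then show ?case using ST by blast
  qed
  obtain N where N: "1 \<le> N" "\<And>m p. N \<le> m \<Longrightarrow> is_prod c m p \<Longrightarrow> p = 0"
    using nilp_all[OF nil] by blast
  have "Nk c (max N 2) = {0}" by (rule Nk_zero, rule N(2)) auto
  then have "Nk c 2 \<subseteq> {0}" using all[of "max N 2"] by simp
  then have "fv.dim (Nk c 2) = 0" by simp
  with d2 show False by simp
qed

lemma phi_sum: "matv (\<lambda>k i. bv i k) x = (\<Sum>i\<in>UNIV. vscale (x i) (bv i))"
  by (simp add: matv_def fun_eq_iff fsum_apply vscale_def mult.commute)

lemma partI_caseC:
  assumes nil: "nilpotent_alg c" and nl: "\<not> leibniz c" and d2: "fv.dim (Nk c 2) = 2"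
  shows "\<exists>d. alg_iso d c \<and> (\<forall>i j k. d i j k \<noteq> 0 \<longrightarrow> allowed i j k)"
proof -
  let ?S = "Nk c 2" and ?T = "Nk c 3"
  obtain e3 where e3: "e3 \<in> ?S" "e3 \<notin> ?T" using caseC_TS[OF nil d2] by blast
  have psub: "fv.span ?T \<subset> fv.span ?S" using TS[of c] e3 by (auto simp: S_span)
  have dT: "fv.dim ?T < 2" using fv.dim_psubset[OF psub] d2 by simp
  obtain e5 where e5: "is_prod c 3 e5" "e5 \<noteq> 0"
  proof -
    have "\<not> (\<forall>p. is_prod c 3 p \<longrightarrow> p = 0)" using nl all3_zero_leibniz by blast
    then show ?thesis using that by blast
  qed
  have e5T: "e5 \<in> ?T" by (rule Nk_base[OF e5(1)])
  have "fv.dim {e5} = 1" using e5(2) by simp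
  then have "fv.span {e5} = fv.span ?T" using fv.dim_eq_span[of "{e5}" ?T] e5T dT by simp
  then have spT: "fv.span {e5} = ?T" by (simp add: S_span)
  have p4: "is_prod c 3 (mul c e5 d)" for d
    using is_prod_collapse[OF is_prod.prod_mul[OF e5(1) is_prod.prod_one[of c d]], of 3] by simp
  have p4': "is_prod c 3 (mul c d e5)" for d
    using is_prod_collapse[OF is_prod.prod_mul[OF is_prod.prod_one[of c d] e5(1)], of 3] by simp
  have l0: "mul c e5 d = 0" for d by (rule annih_l[OF nil e5(1)]) (simp add: spT Nk_base[OF p4])
  have r0: "mul c d e5 = 0" for d by (rule annih_r[OF nil e5(1)]) (simp add: spT Nk_base[OF p4'])
  have ne: "e3 \<noteq> e5" using e3 e5T by auto
  have ind2: "fv.independent {e3, e5}"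
    using e5(2) e3(2) ne spT by (simp add: fv.independent_insert fv.span_empty)
  have card2: "card {e3, e5} = 2" using ne by simp
  have S2: "?S \<subseteq> fv.span {e3, e5}"
    using fv.card_ge_dim_independent[of "{e3, e5}" ?S] e3(1) e5T TS[of c] ind2 card2 d2 by auto
  obtain B where B: "{e3, e5} \<subseteq> B" "fv.independent B" "UNIV \<subseteq> fv.span B"
    using fv.maximal_independent_subset_extend[of "{e3, e5}" UNIV] ind2 by auto
  have cB: "card B = 5" using fv.basis_card_eq_dim[of B UNIV] B dim_UNIV5 by simp
  have fB: "finite B" using fv.finiteI_independent[OF B(2)] .
  have "card (B - {e3, e5}) = 3" using card_Diff_subset[of "{e3, e5}" B] B(1) cB card2 by simp
  then obtain u1 u2 u4 where u: "B - {e3, e5} = {u1, u2, u4}" "u1 \<noteq> u2" "u2 \<noteq> u4" "u1 \<noteq> u4"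
    unfolding card_3_iff by blast
  have un: "u1 \<noteq> e3" "u1 \<noteq> e5" "u2 \<noteq> e3" "u2 \<noteq> e5" "u4 \<noteq> e3" "u4 \<noteq> e5"
    using u(1) by blast+
  define bv where "bv = (\<lambda>i. case i of E1 \<Rightarrow> u1 | E2 \<Rightarrow> u2 | E3 \<Rightarrow> e3 | E4 \<Rightarrow> u4 | E5 \<Rightarrow> e5)"
  have bvs: "bv E1 = u1" "bv E2 = u2" "bv E3 = e3" "bv E4 = u4" "bv E5 = e5" by (simp_all add: bv_def)
  have injb: "inj bv"
    unfolding inj_def bv_def using u(2-4) un ne by (auto split: idx.splits)
  have rb: "range bv = B"
  proof -
    have "B = {u1, u2, u4} \<union> {e3, e5}" using u(1) B(1) by blast
    then show ?thesis by (auto simp: UNIV_idx bvs)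
  qed
  let ?M = "\<lambda>k i. bv i k"
  let ?phi = "matv ?M"
  have sumB: "(\<Sum>v\<in>B. f v) = (\<Sum>i\<in>UNIV. f (bv i))" for f :: "vec5 \<Rightarrow> vec5"
    using sum.reindex[OF injb, of f] rb by simp
  have injphi: "inj ?phi"
  proof (rule injI)
    fix x y assume h: "?phi x = ?phi y"
    let ?cf = "\<lambda>v. x (inv bv v) - y (inv bv v)"
    have "(\<Sum>v\<in>B. vscale (?cf v) v) = (\<Sum>i\<in>UNIV. vscale (x i - y i) (bv i))"
      by (simp add: sumB inv_f_f[OF injb])
    also have "\<dots> = ?phi x - ?phi y"
      by (simp add: phi_sum fun_eq_iff fsum_apply vscale_def sum_subtractf algebra_simps)
    also have "\<dots> = 0" using h by simp
    finally have z: "(\<Sum>v\<in>B. vscale (?cf v) v) = 0" .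
    have "\<forall>v\<in>B. ?cf v = 0"
    proof (rule ccontr)
      assume "\<not> (\<forall>v\<in>B. ?cf v = 0)"
      then obtain v where "v \<in> B" "?cf v \<noteq> 0" by blast
      then have "fv.dependent B" unfolding fv.dependent_finite[OF fB]
        by (intro exI[of _ ?cf]) (use z in auto)
      with B(2) show False by simp
    qed
    moreover have "bv i \<in> B" for i using rb by blast
    ultimately have "?cf (bv i) = 0" for i by blast
    then have "x i = y i" for i by (simp add: inv_f_f[OF injb])
    then show "x = y" by (simp add: fun_eq_iff)
  qed
  have surjphi: "surj ?phi"
  proof -
    have "v \<in> range ?phi" for v
    proof -
      have "v \<in> fv.span B" using B(3) by auto
      then obtain w where "v = (\<Sum>b\<in>B. vscale (w b) b)" using fv.span_finite[OF fB] by auto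
      then have "v = ?phi (\<lambda>i. w (bv i))" by (simp add: sumB phi_sum)
      then show ?thesis by blast
    qed
    then show ?thesis by blast
  qed
  have bij: "bij ?phi" using injphi surjphi by (simp add: bij_def)
  define d where "d i j k = inv ?phi (mul c (bv i) (bv j)) k" for i j k
  have iso: "alg_iso d c"
  proof (rule iso_by_matrix[where M = ?M, OF bij])
    fix i j k
    have "(\<Sum>r\<in>UNIV. bv r k * d i j r) = ?phi (inv ?phi (mul c (bv i) (bv j))) k"
      by (simp add: matv_def d_def)
    also have "\<dots> = mul c (bv i) (bv j) k" using surjphi by (simp add: surj_f_inv_f)
    finally show "(\<Sum>r\<in>UNIV. bv r k * d i j r) = mul c (\<lambda>k. bv i k) (\<lambda>k. bv j k) k" by simp
  qed
  have invphi: "?phi z = v \<Longrightarrow> inv ?phi v = z" for z v using injphi by (metis inv_f_f)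
  have phi_e: "?phi (\<lambda>k. if k = E3 then \<alpha> else if k = E5 then \<beta> else 0) = vscale \<alpha> e3 + vscale \<beta> e5" for \<alpha> \<beta>
    by (simp add: phi_sum sumU bvs vscale_def fun_eq_iff)
  have inS: "mul c u v \<in> ?S" for u v using Nk_mul[OF Nk_1[of u c] Nk_1[of v c]] by (simp add: numeral_2_eq_2)
  have inT1: "mul c e3 v \<in> ?T" for v using Nk_mul[OF e3(1) Nk_1[of v c]] by simp
  have inT2: "mul c v e3 \<in> ?T" for v using Nk_mul[OF Nk_1[of v c] e3(1)] by (simp add: numeral_3_eq_3)
  have decS: "\<exists>\<alpha> \<beta>. v = vscale \<alpha> e3 + vscale \<beta> e5" if "v \<in> ?S" for v
  proof -
    have "v \<in> fv.span (insert e3 {e5})" using S2 that by auto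
    then obtain \<alpha> where "v - vscale \<alpha> e3 \<in> fv.span {e5}" using fv.span_breakdown_eq by blast
    then obtain \<beta> where "v - vscale \<alpha> e3 = vscale \<beta> e5" by (auto simp: fv.span_singleton)
    then have "v = vscale \<alpha> e3 + vscale \<beta> e5" by (simp add: algebra_simps)
    then show ?thesis by blast
  qed
  have decT: "\<exists>\<beta>. v = vscale 0 e3 + vscale \<beta> e5" if vT: "v \<in> ?T" for v
  proof -
    have "v \<in> range (\<lambda>k. vscale k e5)" using vT spT by (simp add: fv.span_singleton)
    then obtain \<beta> where "v = vscale \<beta> e5" by blast
    then show ?thesis by (auto simp: vscale_def fun_eq_iff)
  qed
  have dform: "\<exists>\<alpha> \<beta>. d i j = (\<lambda>k. if k = E3 then \<alpha> else if k = E5 then \<beta> else 0)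
      \<and> ((i = E3 \<or> j = E3) \<longrightarrow> \<alpha> = 0) \<and> ((i = E5 \<or> j = E5) \<longrightarrow> \<alpha> = 0 \<and> \<beta> = 0)" for i j
  proof -
    have dij: "d i j = inv ?phi (mul c (bv i) (bv j))" by (simp add: d_def fun_eq_iff)
    show ?thesis
    proof (cases "i = E5 \<or> j = E5")
      case True
      then have "mul c (bv i) (bv j) = vscale 0 e3 + vscale 0 e5"
        using l0 r0 by (auto simp: bvs vscale_def fun_eq_iff)
      then have "d i j = (\<lambda>k. if k = E3 then 0 else if k = E5 then 0 else 0)"
        unfolding dij by (intro invphi) (simp add: phi_e)
      then show ?thesis using True by blast
    next
      case F5: False
      show ?thesis
      proof (cases "i = E3 \<or> j = E3")
        case True
        then have "mul c (bv i) (bv j) \<in> ?T" using inT1 inT2 by (auto simp: bvs)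
        then obtain \<beta> where "mul c (bv i) (bv j) = vscale 0 e3 + vscale \<beta> e5" using decT by blast
        then have "d i j = (\<lambda>k. if k = E3 then 0 else if k = E5 then \<beta> else 0)"
          unfolding dij by (intro invphi) (simp add: phi_e)
        then show ?thesis using F5 by blast
      next
        case False
        obtain \<alpha> \<beta> where "mul c (bv i) (bv j) = vscale \<alpha> e3 + vscale \<beta> e5" using decS[OF inS] by blast
        then have "d i j = (\<lambda>k. if k = E3 then \<alpha> else if k = E5 then \<beta> else 0)"
          unfolding dij by (intro invphi) (simp add: phi_e)
        then show ?thesis using F5 False by blast
      qed
    qed
  qed
  have "d i j k \<noteq> 0 \<longrightarrow> allowed i j k" for i j k
  proof
    assume nz: "d i j k \<noteq> 0"
    obtain \<alpha> \<beta> where ab: "d i j = (\<lambda>k. if k = E3 then \<alpha> else if k = E5 then \<beta> else 0)"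
      "(i = E3 \<or> j = E3) \<longrightarrow> \<alpha> = 0" "(i = E5 \<or> j = E5) \<longrightarrow> \<alpha> = 0 \<and> \<beta> = 0"
      using dform[of i j] by blast
    have "d i j k = (if k = E3 then \<alpha> else if k = E5 then \<beta> else 0)" using ab(1) by simp
    then show "allowed i j k" using nz ab(2,3) unfolding allowed_def
      by (cases i; cases j; cases k) auto
  qed
  then show ?thesis using iso by blast
qed



theorem theoremA:
  fixes c :: sconst
  assumes "nilpotent_alg c" and "binary_leibniz c"
  shows "leibniz c \<or> alg_iso c B01 \<or> alg_iso c B02 \<or> alg_iso c B03 \<or> alg_iso c B04
    \<or> alg_iso c B05 \<or> alg_iso c B06 \<or> alg_iso c B07 \<or> alg_iso c B08
    \<or> (\<exists>\<alpha>. alg_iso c (B09 \<alpha>)) \<or> alg_iso c B10 \<or> alg_iso c B11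
    \<or> (\<exists>\<alpha>. alg_iso c (B12 \<alpha>)) \<or> alg_iso c B13 \<or> alg_iso c B14"
proof (cases "leibniz c")
  case True then show ?thesis by simp
next
  case nl: False
  have "\<not> 3 \<le> fv.dim (Nk c 2)" by (rule partI_caseA[OF assms nl])
  moreover have "\<not> fv.dim (Nk c 2) \<le> 1" by (rule partI_caseB[OF assms(1) nl])
  ultimately have d2: "fv.dim (Nk c 2) = 2" by arith
  obtain d where iso: "alg_iso d c" and al: "\<And>i j k. d i j k \<noteq> 0 \<Longrightarrow> allowed i j k"
    using partI_caseC[OF assms(1) nl d2] by blast
  have bld: "binary_leibniz d" by (rule binary_transfer[OF iso assms(2)])
  have nld: "\<not> leibniz d" using leibniz_transfer[OF iso] nl by blast
  have deq: "d = GEN (\<lambda>i j. d i j E3) (\<lambda>i j. d i j E5) (\<lambda>j. d E3 j E5) (\<lambda>i. d i E3 E5) (d E3 E3 E5)"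
  proof (intro ext)
    fix i j k
    have "d i j k = (if allowed i j k then d i j k else 0)" using al by auto
    then show "d i j k = GEN (\<lambda>i j. d i j E3) (\<lambda>i j. d i j E5) (\<lambda>j. d E3 j E5) (\<lambda>i. d i E3 E5) (d E3 E3 E5) i j k"
      by (cases i; cases j; cases k) (simp_all add: GEN_def allowed_def)
  qed
  have "LIST d" using partII[of "\<lambda>i j. d i j E3" "\<lambda>i j. d i j E5" "\<lambda>j. d E3 j E5" "\<lambda>i. d i E3 E5" "d E3 E3 E5"] bld nld deq
    by simp
  then have "LIST c" by (rule LIST_iso'[OF iso])
  then show ?thesis unfolding LIST_def by blast
qed

end
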